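(* Let $f:\mathbb{R}^n\to\mathbb{R}$ be $r+1$ times continuously differentiable for some integer $r\ge1$, with $\nabla f$ Lipschitz continuous with constant $L$. Let $x^*$ satisfy $\nabla f(x^* )=0$, and suppose that $\nabla^2 f(x^* )$ has exactly $p$ negative eigenvalues, where $1\le p<n$, and at least one positive eigenvalue; let $\lambda_1>0$ be the largest eigenvalue of $\nabla^2 f(x^* )$. Let \[ 0<\alpha<\frac{4}{\lambda_1},\qquad \beta\in\Big(\max\big(-1+\tfrac{\alpha\lambda_1}{2},\,0\big),\,1\Big), \] and let \[ DG(x^*,x^* )=\begin{bmatrix}(1+\beta)I-\alpha\nabla^2 f(x^* ) & -\beta I\\ I & 0\end{bmatrix}\in\mathbb{R}^{2n\times 2n}. \] Then there exist matrices $\tilde V_s\in\mathbb{R}^{2n\times(2n-p)}$ and $\tilde V_u\in\mathbb{R}^{2n\times p}$ such that: (a) the $2n\times 2n$ matrix $\tilde V=[\tilde V_s\,|\,\tilde V_u]$ is nonsingular; (b) the column space of $\tilde V_s$ is invariant under $DG(x^*,x^* )$, and all eigenvalues of the restriction of $DG(x^*,x^* )$ to this subspace have magnitude less than or equal to $1$; (c) the column space of $\tilde V_u$ is invariant under $DG(x^*,x^* )$, and all eigenvalues of the restriction of $DG(x^*,x^* )$ to this subspace have magnitude greater than $1$.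
   Context: $DG(x^*,x^* )$ is the Jacobian at $(x^*,x^* )$ of the heavy-ball map $G(z_1,z_2)=(z_1-\alpha\nabla f(z_1)+\beta(z_1-z_2),\,z_1)$ on $\mathbb{R}^n\times\mathbb{R}^n$. Eigenvalues may be complex; "magnitude" means complex modulus. *)

theory Defs
  imports "HOL-Analysis.Analysis" "Jordan_Normal_Form.Jordan_Normal_Form"
begin

fun pd :: "'n::finite list \<Rightarrow> (real^'n \<Rightarrow> real) \<Rightarrow> real^'n \<Rightarrow> real" where
  "pd [] f = f"
| "pd (i # is) f = (\<lambda>x. deriv (\<lambda>t. pd is f (x + t *\<^sub>R axis i 1)) 0)"

definition Ck :: "nat \<Rightarrow> (real^'n::finite \<Rightarrow> real) \<Rightarrow> bool" where
  "Ck k f \<longleftrightarrow>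
     (\<forall>is. length is < k \<longrightarrow>
        (\<forall>x i. (\<lambda>t. pd is f (x + t *\<^sub>R axis i 1)) differentiable (at 0))) \<and>
     (\<forall>is. length is \<le> k \<longrightarrow> continuous_on UNIV (pd is f))"

definition grad :: "(real^'n::finite \<Rightarrow> real) \<Rightarrow> real^'n \<Rightarrow> real^'n" where
  "grad f x = (\<chi> i. pd [i] f x)"

definition hess :: "(real^'n::finite \<Rightarrow> real) \<Rightarrow> real^'n \<Rightarrow> real^'n^'n" where
  "hess f x = (\<chi> i j. pd [i, j] f x)"

text \<open>A fixed enumeration of the finite index type (any bijection; spectral data do
  not depend on the choice).\<close>
definition idx :: "nat \<Rightarrow> 'n::finite" where
  "idx = (SOME b. bij_betw b {..<CARD('n)} (UNIV::'n set))"

definition to_mat :: "real^'n::finite^'n \<Rightarrow> real mat" where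
  "to_mat A = mat CARD('n) CARD('n) (\<lambda>(i,j). A $ idx i $ idx j)"

definition neg_eig_count :: "real mat \<Rightarrow> nat" where
  "neg_eig_count H = (\<Sum>a\<in>{a. a < 0 \<and> poly (char_poly H) a = 0}. order a (char_poly H))"

definition DG :: "real \<Rightarrow> real \<Rightarrow> real mat \<Rightarrow> real mat" where
  "DG \<alpha> \<beta> H = (let n = dim_row H in
     four_block_mat ((1 + \<beta>) \<cdot>\<^sub>m 1\<^sub>m n - \<alpha> \<cdot>\<^sub>m H) ((- \<beta>) \<cdot>\<^sub>m 1\<^sub>m n) (1\<^sub>m n) (0\<^sub>m n n))"

definition hcat :: "'a mat \<Rightarrow> 'a mat \<Rightarrow> 'a mat" where
  "hcat A B = mat (dim_row A) (dim_col A + dim_col B)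
     (\<lambda>(i,j). if j < dim_col A then A $$ (i,j) else B $$ (i, j - dim_col A))"

definition col_space_invariant :: "real mat \<Rightarrow> real mat \<Rightarrow> bool" where
  "col_space_invariant A V \<longleftrightarrow>
     (\<forall>c \<in> carrier_vec (dim_col V). \<exists>d \<in> carrier_vec (dim_col V). A *\<^sub>v (V *\<^sub>v c) = V *\<^sub>v d)"

definition restr_eigenvalue :: "real mat \<Rightarrow> real mat \<Rightarrow> complex \<Rightarrow> bool" where
  "restr_eigenvalue A V \<mu> \<longleftrightarrow>
     (\<exists>c \<in> carrier_vec (dim_col V).
        let v = map_mat complex_of_real V *\<^sub>v c in
        v \<noteq> 0\<^sub>v (dim_row V) \<and> map_mat complex_of_real A *\<^sub>v v = \<mu> \<cdot>\<^sub>v v)"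

end

theory Submission
  imports Defs
begin



lemma pd_Cons_deriv:
  fixes f :: "real^'n::finite \<Rightarrow> real"
  assumes "Ck k f" "length is < k"
  shows "((\<lambda>s. pd is f (x + s *\<^sub>R axis i 1)) has_real_derivative pd (i # is) f (x + s *\<^sub>R axis i 1)) (at s)"
proof -
  let ?g = "\<lambda>t. pd is f ((x + s *\<^sub>R axis i 1) + t *\<^sub>R axis i 1)"
  have "?g differentiable (at 0)" using assms unfolding Ck_def by blast
  hence "(?g has_real_derivative deriv ?g 0) (at 0)"
    using DERIV_deriv_iff_real_differentiable by blast
  hence "(?g has_real_derivative pd (i # is) f (x + s *\<^sub>R axis i 1)) (at (0::real))" by simp
  moreover have "?g = (\<lambda>t. pd is f (x + (t + s) *\<^sub>R axis i 1))"
    by (simp add: scaleR_add_left algebra_simps)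
  ultimately have "((\<lambda>t. pd is f (x + (t + s) *\<^sub>R axis i 1)) has_real_derivative pd (i # is) f (x + s *\<^sub>R axis i 1)) (at 0)"
    by simp
  hence "((\<lambda>s. pd is f (x + s *\<^sub>R axis i 1)) has_real_derivative pd (i # is) f (x + s *\<^sub>R axis i 1)) (at (0 + s))"
    using DERIV_shift[where f="\<lambda>s. pd is f (x + s *\<^sub>R axis i 1)" and x=0 and z=s] by simp
  thus ?thesis by simp
qed

lemma mixed_diff:
  fixes f :: "real^'n::finite \<Rightarrow> real"
  assumes ck: "Ck k f" and k: "2 \<le> k" and h: "0 < h"
  shows "\<exists>\<xi> \<eta>. 0 < \<xi> \<and> \<xi> < h \<and> 0 < \<eta> \<and> \<eta> < h \<and>
     f (x + h *\<^sub>R axis i 1 + h *\<^sub>R axis j 1) - f (x + h *\<^sub>R axis i 1) - f (x + h *\<^sub>R axis j 1) + f x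
     = h * h * pd [j, i] f (x + \<xi> *\<^sub>R axis i 1 + \<eta> *\<^sub>R axis j 1)"
proof -
  let ?ei = "axis i (1::real)" and ?ej = "axis j (1::real)"
  define \<phi> where "\<phi> s = f (x + h *\<^sub>R ?ej + s *\<^sub>R ?ei) - f (x + s *\<^sub>R ?ei)" for s
  have d\<phi>: "(\<phi> has_real_derivative (pd [i] f (x + h *\<^sub>R ?ej + s *\<^sub>R ?ei) - pd [i] f (x + s *\<^sub>R ?ei))) (at s)" for s
    unfolding \<phi>_def
    using pd_Cons_deriv[OF ck, of "[]" "x + h *\<^sub>R ?ej" i s] pd_Cons_deriv[OF ck, of "[]" x i s] k
    by (intro DERIV_diff) auto
  obtain \<xi> where \<xi>: "0 < \<xi>" "\<xi> < h" "\<phi> h - \<phi> 0 = (h - 0) * (pd [i] f (x + h *\<^sub>R ?ej + \<xi> *\<^sub>R ?ei) - pd [i] f (x + \<xi> *\<^sub>R ?ei))"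
    using MVT2[OF h, of \<phi> "\<lambda>s. pd [i] f (x + h *\<^sub>R ?ej + s *\<^sub>R ?ei) - pd [i] f (x + s *\<^sub>R ?ei)"] d\<phi> by blast
  define \<psi> where "\<psi> t = pd [i] f (x + \<xi> *\<^sub>R ?ei + t *\<^sub>R ?ej)" for t
  have d\<psi>: "(\<psi> has_real_derivative pd [j, i] f (x + \<xi> *\<^sub>R ?ei + t *\<^sub>R ?ej)) (at t)" for t
    unfolding \<psi>_def using pd_Cons_deriv[OF ck, of "[i]" "x + \<xi> *\<^sub>R ?ei" j t] k by auto
  obtain \<eta> where \<eta>: "0 < \<eta>" "\<eta> < h" "\<psi> h - \<psi> 0 = (h - 0) * pd [j, i] f (x + \<xi> *\<^sub>R ?ei + \<eta> *\<^sub>R ?ej)"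
    using MVT2[OF h, of \<psi> "\<lambda>t. pd [j, i] f (x + \<xi> *\<^sub>R ?ei + t *\<^sub>R ?ej)"] d\<psi> by blast
  have "\<psi> h = pd [i] f (x + h *\<^sub>R ?ej + \<xi> *\<^sub>R ?ei)" unfolding \<psi>_def by (simp add: add_ac)
  moreover have "\<psi> 0 = pd [i] f (x + \<xi> *\<^sub>R ?ei)" unfolding \<psi>_def by simp
  moreover have "\<phi> h - \<phi> 0 = f (x + h *\<^sub>R ?ei + h *\<^sub>R ?ej) - f (x + h *\<^sub>R ?ei) - f (x + h *\<^sub>R ?ej) + f x"
    unfolding \<phi>_def by (simp add: add_ac)
  ultimately show ?thesis using \<xi> \<eta> by (intro exI[of _ \<xi>] exI[of _ \<eta>]) auto
qed

lemma pd_sym: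
  fixes f :: "real^'n::finite \<Rightarrow> real"
  assumes ck: "Ck k f" and k: "2 \<le> k"
  shows "pd [i, j] f x = pd [j, i] f x"
proof (rule ccontr)
  assume ne: "pd [i, j] f x \<noteq> pd [j, i] f x"
  define e where "e = \<bar>pd [i, j] f x - pd [j, i] f x\<bar> / 2"
  have e: "e > 0" using ne by (simp add: e_def)
  have c1: "continuous_on UNIV (pd [i, j] f)" and c2: "continuous_on UNIV (pd [j, i] f)"
  proof -
    have "\<forall>is. length is \<le> k \<longrightarrow> continuous_on UNIV (pd is f)" using ck unfolding Ck_def by blast
    from this[rule_format, of "[i,j]"] this[rule_format, of "[j,i]"] k
    show "continuous_on UNIV (pd [i, j] f)" "continuous_on UNIV (pd [j, i] f)" by auto
  qed
  obtain d1 where d1: "d1 > 0" "\<And>y. dist y x < d1 \<Longrightarrow> dist (pd [i, j] f y) (pd [i, j] f x) < e"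
    using c1 e unfolding continuous_on_iff by (metis UNIV_I)
  obtain d2 where d2: "d2 > 0" "\<And>y. dist y x < d2 \<Longrightarrow> dist (pd [j, i] f y) (pd [j, i] f x) < e"
    using c2 e unfolding continuous_on_iff by (metis UNIV_I)
  define h where "h = min d1 d2 / 3"
  have h: "h > 0" "2 * h < d1" "2 * h < d2" using d1 d2 by (auto simp: h_def)
  have close: "dist (x + a *\<^sub>R axis i 1 + b *\<^sub>R axis j 1) x \<le> 2 * h"
    if "0 < a" "a < h" "0 < b" "b < h" for a b
  proof -
    have "dist (x + a *\<^sub>R axis i 1 + b *\<^sub>R axis j 1) x = norm (a *\<^sub>R axis i (1::real) + b *\<^sub>R axis j 1)"
      by (simp add: dist_norm)
    also have "\<dots> \<le> norm (a *\<^sub>R axis i (1::real)) + norm (b *\<^sub>R axis j (1::real))" by (rule norm_triangle_ineq)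
    also have "\<dots> = a + b" using that by simp
    finally show ?thesis using that by simp
  qed
  obtain a b where ab: "0 < a" "a < h" "0 < b" "b < h"
     "f (x + h *\<^sub>R axis i 1 + h *\<^sub>R axis j 1) - f (x + h *\<^sub>R axis i 1) - f (x + h *\<^sub>R axis j 1) + f x
     = h * h * pd [j, i] f (x + a *\<^sub>R axis i 1 + b *\<^sub>R axis j 1)"
    using mixed_diff[OF ck k h(1), of x i j] by blast
  obtain a' b' where ab': "0 < a'" "a' < h" "0 < b'" "b' < h"
     "f (x + h *\<^sub>R axis j 1 + h *\<^sub>R axis i 1) - f (x + h *\<^sub>R axis j 1) - f (x + h *\<^sub>R axis i 1) + f x
     = h * h * pd [i, j] f (x + a' *\<^sub>R axis j 1 + b' *\<^sub>R axis i 1)"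
    using mixed_diff[OF ck k h(1), of x j i] by blast
  have eq: "pd [j, i] f (x + a *\<^sub>R axis i 1 + b *\<^sub>R axis j 1) = pd [i, j] f (x + a' *\<^sub>R axis j 1 + b' *\<^sub>R axis i 1)"
  proof -
    have "h * h * pd [j, i] f (x + a *\<^sub>R axis i 1 + b *\<^sub>R axis j 1) = h * h * pd [i, j] f (x + a' *\<^sub>R axis j 1 + b' *\<^sub>R axis i 1)"
      using ab(5) ab'(5) by (simp add: algebra_simps)
    thus ?thesis using h by simp
  qed
  have "dist (pd [j, i] f (x + a *\<^sub>R axis i 1 + b *\<^sub>R axis j 1)) (pd [j, i] f x) < e"
  proof -
    have "dist (x + a *\<^sub>R axis i 1 + b *\<^sub>R axis j 1) x < d2"
      using close[OF ab(1-4)] h by simp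
    thus ?thesis by (rule d2(2))
  qed
  moreover have "dist (pd [i, j] f (x + a' *\<^sub>R axis j 1 + b' *\<^sub>R axis i 1)) (pd [i, j] f x) < e"
  proof -
    have pt: "x + a' *\<^sub>R axis j 1 + b' *\<^sub>R axis i 1 = x + b' *\<^sub>R axis i 1 + a' *\<^sub>R axis j (1::real)"
      by (simp add: algebra_simps)
    have "dist (x + a' *\<^sub>R axis j 1 + b' *\<^sub>R axis i 1) x < d1"
      using close[OF ab'(3,4,1,2)] h unfolding pt by simp
    thus ?thesis by (rule d1(2))
  qed
  ultimately have "\<bar>pd [i, j] f x - pd [j, i] f x\<bar> < 2 * e" using eq by (simp add: dist_real_def)
  thus False by (simp add: e_def)
qed



lemma sym_inner:
  fixes H :: "real^'n::finite^'n"
  assumes sym: "\<And>i j. H $ i $ j = H $ j $ i"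
  shows "inner x (H *v y) = inner (H *v x) y"
proof -
  have T: "transpose H = H" by (simp add: vec_eq_iff transpose_def sym)
  have "inner x (H *v y) = inner (x v* H) y" by (simp add: dot_lmul_matrix)
  also have "x v* H = transpose H *v x" by simp
  finally show ?thesis using T by simp
qed

lemma rayleigh_step:
  fixes H :: "real^'n::finite^'n" and u :: "nat \<Rightarrow> real^'n"
  assumes sym: "\<And>i j. H $ i $ j = H $ j $ i"
    and k: "k < CARD('n)"
    and ev: "\<And>j. j < k \<Longrightarrow> H *v u j = lam j *\<^sub>R u j"
  obtains u0 lam0 where "norm u0 = 1" "H *v u0 = lam0 *\<^sub>R u0" "\<And>i. i < k \<Longrightarrow> inner u0 (u i) = 0"
    "\<And>x. norm x = 1 \<Longrightarrow> (\<forall>i<k. inner x (u i) = 0) \<Longrightarrow> inner x (H *v x) \<le> lam0"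
proof -
  define S where "S = {x. \<forall>i<k. inner x (u i) = 0}"
  have S_eq: "S = (\<Inter>i\<in>{..<k}. {x. inner (u i) x = 0})" by (auto simp: S_def inner_commute)
  have clS: "closed S" unfolding S_eq by (intro closed_INT ballI closed_hyperplane)
  have subS: "x \<in> S \<Longrightarrow> y \<in> S \<Longrightarrow> x + c *\<^sub>R y \<in> S" for x y c
    by (auto simp: S_def inner_add_left)
  have "dim (u ` {..<k}) \<le> card (u ` {..<k})" by (rule dim_le_card) (auto intro: span_base)
  also have "\<dots> \<le> k" using card_image_le[of "{..<k}" u] by simp
  finally have "dim (u ` {..<k}) < DIM(real^'n)" using k by simp
  then obtain x0 where x0: "x0 \<noteq> 0" "\<And>y. y \<in> span (u ` {..<k}) \<Longrightarrow> inner x0 y = 0"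
    using orthogonal_to_subspace_exists unfolding Linear_Algebra.orthogonal_def by metis
  have x0S: "x0 \<in> S" using x0(2) by (auto simp: S_def intro: span_base)
  define C where "C = sphere 0 1 \<inter> S"
  have cC: "compact C" unfolding C_def by (intro compact_Int_closed compact_sphere clS)
  have neC: "(x0 /\<^sub>R norm x0) \<in> C" using x0 x0S by (auto simp: C_def S_def)
  have contf: "continuous_on C (\<lambda>x. inner x (H *v x))"
  proof -
    have "continuous_on C ((*v) H)"
      using matrix_vector_mul_linear linear_conv_bounded_linear by (metis linear_continuous_on)
    thus ?thesis by (intro continuous_intros)
  qed
  obtain u0 where u0C: "u0 \<in> C" and umax: "\<And>y. y \<in> C \<Longrightarrow> inner y (H *v y) \<le> inner u0 (H *v u0)"
    using continuous_attains_sup[OF cC _ contf] neC by blast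
  define lam0 where "lam0 = inner u0 (H *v u0)"
  have u0S: "u0 \<in> S" and nu0: "norm u0 = 1" using u0C by (auto simp: C_def)
  have uu: "inner u0 u0 = 1" using nu0 by (simp add: power2_norm_eq_inner[symmetric])
  have gen: "inner z (H *v z) \<le> lam0 * inner z z" if zS: "z \<in> S" for z
  proof (cases "z = 0")
    case True thus ?thesis by simp
  next
    case False
    hence nz: "norm z > 0" by simp
    have "z /\<^sub>R norm z \<in> C" using zS False by (auto simp: C_def S_def)
    hence "inner (z /\<^sub>R norm z) (H *v (z /\<^sub>R norm z)) \<le> lam0" using umax lam0_def by blast
    hence "inner z (H *v z) / (norm z)^2 \<le> lam0"
      by (simp add: matrix_vector_mult_scaleR power2_eq_square divide_inverse mult_ac)
    hence "inner z (H *v z) \<le> lam0 * (norm z)^2" using nz by (simp add: divide_le_eq mult_ac)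
    thus ?thesis by (simp add: power2_norm_eq_inner)
  qed
  define w where "w = H *v u0 - lam0 *\<^sub>R u0"
  have wS: "w \<in> S"
  proof -
    have "inner (H *v u0) (u i) = 0" if "i < k" for i
    proof -
      have "inner (H *v u0) (u i) = inner u0 (H *v u i)" using sym_inner[OF sym] by simp
      also have "\<dots> = lam i * inner u0 (u i)" using ev that by simp
      also have "\<dots> = 0" using u0S that by (simp add: S_def)
      finally show ?thesis .
    qed
    thus ?thesis using u0S by (simp add: S_def w_def inner_diff_left)
  qed
  have wu0: "inner w u0 = 0"
  proof -
    have "inner w u0 = inner (H *v u0) u0 - lam0 * inner u0 u0" by (simp add: w_def inner_diff_left)
    moreover have "inner (H *v u0) u0 = lam0" unfolding lam0_def by (rule inner_commute)
    ultimately show ?thesis using uu by simp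
  qed
  have key: "2 * t * inner w w \<le> t^2 * (lam0 * inner w w - inner w (H *v w))" for t
  proof -
    have "u0 + t *\<^sub>R w \<in> S" using subS u0S wS by blast
    from gen[OF this]
    have "inner (u0 + t *\<^sub>R w) (H *v (u0 + t *\<^sub>R w)) \<le> lam0 * inner (u0 + t *\<^sub>R w) (u0 + t *\<^sub>R w)" .
    moreover have "inner u0 (H *v w) = inner w (H *v u0)"
      using sym_inner[OF sym, of u0 w] by (simp add: inner_commute)
    moreover have "inner w (H *v u0) = inner w w"
    proof -
      have "H *v u0 = w + lam0 *\<^sub>R u0" by (simp add: w_def)
      thus ?thesis by (simp add: inner_add_right wu0)
    qed
    ultimately show ?thesis
      by (simp add: matrix_vector_right_distrib matrix_vector_mult_scaleR inner_add_left inner_add_right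
          wu0 inner_commute[of u0 w] uu lam0_def[symmetric] algebra_simps power2_eq_square)
  qed
  have "inner w w = 0"
  proof (rule ccontr)
    assume "inner w w \<noteq> 0"
    hence a: "inner w w > 0" by (simp add: order_less_le)
    define E where "E = lam0 * inner w w - inner w (H *v w)"
    define t where "t = inner w w / (\<bar>E\<bar> + 1)"
    have t: "t > 0" using a by (simp add: t_def)
    have "2 * t * inner w w \<le> t^2 * E" using key unfolding E_def .
    hence "2 * inner w w \<le> t * E" using t by (simp add: power2_eq_square)
    also have "t * E \<le> t * \<bar>E\<bar>" using t by (simp add: mult_left_mono)
    also have "t * \<bar>E\<bar> < inner w w"
      using a by (simp add: t_def divide_less_eq field_simps)
    finally show False using a by simp
  qed
  hence "w = 0" by simp
  hence ev0: "H *v u0 = lam0 *\<^sub>R u0" by (simp add: w_def)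
  show ?thesis
  proof (rule that[OF nu0 ev0])
    show "inner u0 (u i) = 0" if "i < k" for i using u0S that by (simp add: S_def)
    show "inner x (H *v x) \<le> lam0" if "norm x = 1" "\<forall>i<k. inner x (u i) = 0" for x
      using umax[of x] that by (simp add: C_def S_def lam0_def)
  qed
qed

lemma spectral_induct:
  fixes H :: "real^'n::finite^'n"
  assumes sym: "\<And>i j. H $ i $ j = H $ j $ i" and kn: "k \<le> CARD('n)"
  shows "\<exists>u lam. (\<forall>j<k. norm (u j) = 1 \<and> H *v u j = lam j *\<^sub>R u j)
    \<and> (\<forall>i<k. \<forall>j<k. i \<noteq> j \<longrightarrow> inner (u i) (u j) = 0)
    \<and> (\<forall>j<k. \<forall>x. norm x = 1 \<longrightarrow> (\<forall>i<j. inner x (u i) = 0) \<longrightarrow> inner x (H *v x) \<le> lam j)"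
  using kn
proof (induction k)
  case 0 show ?case by simp
next
  case (Suc k)
  then obtain u lam where IH: "\<forall>j<k. norm (u j) = 1 \<and> H *v u j = lam j *\<^sub>R u j"
    "\<forall>i<k. \<forall>j<k. i \<noteq> j \<longrightarrow> inner (u i) (u j) = 0"
    "\<forall>j<k. \<forall>x. norm x = 1 \<longrightarrow> (\<forall>i<j. inner x (u i) = 0) \<longrightarrow> inner x (H *v x) \<le> lam j"
    by auto
  have k: "k < CARD('n)" using Suc by simp
  obtain u0 lam0 where u0: "norm u0 = 1" "H *v u0 = lam0 *\<^sub>R u0" "\<And>i. i < k \<Longrightarrow> inner u0 (u i) = 0"
    "\<And>x. norm x = 1 \<Longrightarrow> (\<forall>i<k. inner x (u i) = 0) \<Longrightarrow> inner x (H *v x) \<le> lam0"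
    using rayleigh_step[OF sym k, of u lam] IH(1) by blast
  show ?case
  proof (intro exI[of _ "u(k := u0)"] exI[of _ "lam(k := lam0)"] conjI allI impI)
    fix j assume "j < Suc k"
    thus "norm ((u(k := u0)) j) = 1" "H *v (u(k := u0)) j = (lam(k := lam0)) j *\<^sub>R (u(k := u0)) j"
      using IH(1) u0 by (auto simp: less_Suc_eq)
  next
    fix i j assume "i < Suc k" "j < Suc k" "i \<noteq> j"
    thus "inner ((u(k := u0)) i) ((u(k := u0)) j) = 0"
      using IH(2) u0(3) by (auto simp: less_Suc_eq inner_commute)
  next
    fix j x assume j: "j < Suc k" and x: "norm x = 1" "\<forall>i<j. inner x ((u(k := u0)) i) = 0"
    show "inner x (H *v x) \<le> (lam(k := lam0)) j"
    proof (cases "j = k")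
      case True thus ?thesis using x u0(4) by auto
    next
      case False
      hence "j < k" using j by simp
      thus ?thesis using x IH(3) by auto
    qed
  qed
qed

lemma spectral_sorted:
  fixes H :: "real^'n::finite^'n"
  assumes sym: "\<And>i j. H $ i $ j = H $ j $ i"
  shows "\<exists>u lam. (\<forall>j<CARD('n). norm (u j) = 1 \<and> H *v u j = lam j *\<^sub>R u j)
    \<and> (\<forall>i<CARD('n). \<forall>j<CARD('n). i \<noteq> j \<longrightarrow> inner (u i) (u j) = 0)
    \<and> (\<forall>i j. i \<le> j \<longrightarrow> j < CARD('n) \<longrightarrow> lam j \<le> lam i)"
proof -
  obtain u lam where A: "\<forall>j<CARD('n). norm (u j) = 1 \<and> H *v u j = lam j *\<^sub>R u j"
    "\<forall>i<CARD('n). \<forall>j<CARD('n). i \<noteq> j \<longrightarrow> inner (u i) (u j) = 0"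
    "\<forall>j<CARD('n). \<forall>x. norm x = 1 \<longrightarrow> (\<forall>i<j. inner x (u i) = 0) \<longrightarrow> inner x (H *v x) \<le> lam j"
    using spectral_induct[OF sym order_refl] by blast
  have "lam j \<le> lam i" if ij: "i \<le> j" "j < CARD('n)" for i j
  proof -
    have uj: "norm (u j) = 1" "H *v u j = lam j *\<^sub>R u j" using A(1) ij by auto
    have "inner (u j) (u j) = 1" using uj(1) by (simp add: power2_norm_eq_inner[symmetric])
    hence "inner (u j) (H *v u j) = lam j" using uj(2) by simp
    moreover have "inner (u j) (H *v u j) \<le> lam i"
      using A(3) ij uj(1) A(2) by auto
    ultimately show ?thesis by simp
  qed
  thus ?thesis using A(1,2) by blast
qed



lemma idx_bij: "bij_betw (idx :: nat \<Rightarrow> 'n::finite) {..<CARD('n)} UNIV"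
proof -
  have "\<exists>b. bij_betw b {..<CARD('n)} (UNIV::'n set)"
    using ex_bij_betw_nat_finite[of "UNIV::'n set"] by (auto simp: atLeast0LessThan)
  thus ?thesis unfolding idx_def by (rule someI_ex)
qed

lemma sum_idx: "(\<Sum>k\<in>UNIV. g k) = (\<Sum>i<CARD('n::finite). g (idx i :: 'n))"
  using sum.reindex_bij_betw[OF idx_bij, of g] by simp

definition tv :: "real^'n::finite \<Rightarrow> real vec" where
  "tv x = vec CARD('n) (\<lambda>i. x $ idx i)"

lemma tv_carrier[simp]: "tv (x::real^'n::finite) \<in> carrier_vec CARD('n)"
  and tv_dim[simp]: "dim_vec (tv (x::real^'n::finite)) = CARD('n)"
  by (auto simp: tv_def)

lemma tv_index[simp]: "i < CARD('n) \<Longrightarrow> tv (x::real^'n::finite) $ i = x $ idx i"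
  by (simp add: tv_def)

lemma to_mat_carrier[simp]: "to_mat (A::real^'n::finite^'n) \<in> carrier_mat CARD('n) CARD('n)"
  by (simp add: to_mat_def)

lemma to_mat_dims[simp]: "dim_row (to_mat (A::real^'n::finite^'n)) = CARD('n)" "dim_col (to_mat A) = CARD('n)"
  by (simp_all add: to_mat_def)

lemma tv_mult: "to_mat (A::real^'n::finite^'n) *\<^sub>v tv x = tv (A *v x)"
proof (rule eq_vecI)
  fix i assume "i < dim_vec (tv (A *v x))"
  hence i: "i < CARD('n)" by simp
  have "(to_mat A *\<^sub>v tv x) $ i = (\<Sum>j<CARD('n). A $ idx i $ idx j * x $ idx j)"
    using i by (simp add: to_mat_def mult_mat_vec_def scalar_prod_def row_def atLeast0LessThan)
  also have "\<dots> = (\<Sum>k\<in>UNIV. A $ idx i $ k * x $ k)" by (rule sum_idx[symmetric])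
  also have "\<dots> = tv (A *v x) $ i" using i by (simp add: matrix_vector_mult_def)
  finally show "(to_mat A *\<^sub>v tv x) $ i = tv (A *v x) $ i" .
qed (simp add: to_mat_def)

lemma tv_inner: "tv x \<bullet> tv (y::real^'n::finite) = inner x y"
proof -
  have "tv x \<bullet> tv y = (\<Sum>i<CARD('n). x $ idx i * y $ idx i)"
    by (simp add: scalar_prod_def atLeast0LessThan)
  also have "\<dots> = (\<Sum>k\<in>UNIV. x $ k * y $ k)" by (rule sum_idx[symmetric])
  finally show ?thesis by (simp add: inner_vec_def)
qed

lemma tv_eq_0: "tv (x::real^'n::finite) = 0\<^sub>v CARD('n) \<longleftrightarrow> x = 0"
proof
  assume "tv x = 0\<^sub>v CARD('n)"
  hence "inner x x = 0" using tv_inner[of x x] by simp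
  thus "x = 0" by simp
qed (simp add: tv_def vec_eq_iff)

lemma order_prod_lin:
  fixes lam :: "'i \<Rightarrow> real"
  assumes "finite I"
  shows "order a (\<Prod>i\<in>I. [:-lam i, 1:]) = card {i\<in>I. lam i = a}"
  using assms
proof (induction I rule: finite_induct)
  case empty thus ?case by simp
next
  case (insert x F)
  have nzF: "(\<Prod>i\<in>F. [:-lam i, 1:]) \<noteq> 0"
    using insert.hyps(1) by (subst prod_zero_iff) auto
  have nz1: "[:-lam x, 1:] \<noteq> 0" by simp
  have nz: "[:-lam x, 1:] * (\<Prod>i\<in>F. [:-lam i, 1:]) \<noteq> 0"
    using nzF nz1 mult_eq_0_iff by blast
  have o1: "order a [:-lam x, 1:] = (if lam x = a then 1 else 0)"
  proof (cases "lam x = a")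
    case True thus ?thesis using order_power_n_n[of a 1] by simp
  next
    case False
    have p: "poly [:-lam x, 1:] a \<noteq> 0" using False by simp
    from order_0I[OF p] False show ?thesis by simp
  qed
  have "{i\<in>insert x F. lam i = a} = (if lam x = a then insert x {i\<in>F. lam i = a} else {i\<in>F. lam i = a})"
    by auto
  hence c: "card {i\<in>insert x F. lam i = a} = (if lam x = a then 1 else 0) + card {i\<in>F. lam i = a}"
    using insert.hyps by auto
  show ?case using insert order_mult[OF nz, of a] o1 c by simp
qed

lemma neg_count_prod:
  fixes lam :: "nat \<Rightarrow> real"
  shows "(\<Sum>a\<in>{a. a < 0 \<and> poly (\<Prod>i<n. [:-lam i, 1:]) a = 0}. order a (\<Prod>i<n. [:-lam i, 1:]))
         = card {i. i < n \<and> lam i < 0}"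
proof -
  let ?N = "{i. i < n \<and> lam i < 0}"
  have R: "{a. a < 0 \<and> poly (\<Prod>i<n. [:-lam i, 1:]) a = 0} = lam ` ?N"
    by (auto simp: poly_prod prod_zero_iff)
  have fN: "finite ?N" by simp
  have "(\<Sum>a\<in>lam ` ?N. order a (\<Prod>i<n. [:-lam i, 1:])) = (\<Sum>a\<in>lam ` ?N. card {i \<in> ?N. lam i = a})"
  proof (rule sum.cong)
    fix a assume "a \<in> lam ` ?N"
    hence a: "a < 0" by auto
    have "{i\<in>{..<n}. lam i = a} = {i \<in> ?N. lam i = a}" using a by auto
    thus "order a (\<Prod>i<n. [:-lam i, 1:]) = card {i \<in> ?N. lam i = a}"
      using order_prod_lin[of "{..<n}" a lam] by simp
  qed simp
  also have "\<dots> = (\<Sum>a\<in>lam ` ?N. \<Sum>i\<in>{i \<in> ?N. lam i = a}. (1::nat))" by simp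
  also have "\<dots> = (\<Sum>i\<in>?N. (1::nat))" using sum.image_gen[OF fN, of "\<lambda>_. (1::nat)" lam] by simp
  finally show ?thesis unfolding R by simp
qed

definition Umat :: "(nat \<Rightarrow> real^'n::finite) \<Rightarrow> real mat" where
  "Umat u = mat CARD('n) CARD('n) (\<lambda>(i,j). u j $ idx i)"

definition Dmat :: "nat \<Rightarrow> (nat \<Rightarrow> real) \<Rightarrow> real mat" where
  "Dmat n lam = mat n n (\<lambda>(i,j). if i = j then lam i else 0)"

lemma Umat_carrier[simp]: "Umat (u :: nat \<Rightarrow> real^'n::finite) \<in> carrier_mat CARD('n) CARD('n)"
  by (simp add: Umat_def)

lemma Umat_dims[simp]: "dim_row (Umat (u :: nat \<Rightarrow> real^'n::finite)) = CARD('n)" "dim_col (Umat u) = CARD('n)"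
  by (simp_all add: Umat_def)

lemma Umat_col: "j < CARD('n) \<Longrightarrow> col (Umat (u :: nat \<Rightarrow> real^'n::finite)) j = tv (u j)"
  by (auto simp: Umat_def tv_def col_def)

lemma Umat_orth:
  fixes u :: "nat \<Rightarrow> real^'n::finite"
  assumes orth: "\<And>i j. i < CARD('n) \<Longrightarrow> j < CARD('n) \<Longrightarrow> inner (u i) (u j) = (if i = j then 1 else 0)"
  shows "transpose_mat (Umat u) * Umat u = 1\<^sub>m CARD('n)" "Umat u * transpose_mat (Umat u) = 1\<^sub>m CARD('n)"
proof -
  show 1: "transpose_mat (Umat u) * Umat u = 1\<^sub>m CARD('n)"
  proof (rule eq_matI)
    fix i j assume "i < dim_row (1\<^sub>m CARD('n))" "j < dim_col (1\<^sub>m CARD('n) :: real mat)"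
    hence ij: "i < CARD('n)" "j < CARD('n)" by auto
    have "(transpose_mat (Umat u) * Umat u) $$ (i, j) = col (Umat u) i \<bullet> col (Umat u) j"
      using ij by (simp add: Umat_def)
    also have "\<dots> = inner (u i) (u j)" using ij by (simp add: Umat_col tv_inner)
    finally show "(transpose_mat (Umat u) * Umat u) $$ (i, j) = 1\<^sub>m CARD('n) $$ (i, j)"
      using ij orth by simp
  qed (auto simp: Umat_def)
  show "Umat u * transpose_mat (Umat u) = 1\<^sub>m CARD('n)"
    by (rule mat_mult_left_right_inverse[OF _ _ 1]) auto
qed

lemma Umat_eig:
  fixes u :: "nat \<Rightarrow> real^'n::finite" and H :: "real^'n^'n"
  assumes ev: "\<And>j. j < CARD('n) \<Longrightarrow> H *v u j = lam j *\<^sub>R u j"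
  shows "to_mat H * Umat u = Umat u * Dmat CARD('n) lam"
proof (rule eq_matI)
  fix i j assume "i < dim_row (Umat u * Dmat CARD('n) lam)" "j < dim_col (Umat u * Dmat CARD('n) lam)"
  hence ij: "i < CARD('n)" "j < CARD('n)" by (auto simp: Dmat_def Umat_def)
  have "(to_mat H * Umat u) $$ (i, j) = (to_mat H *\<^sub>v col (Umat u) j) $ i"
    using ij by (simp add: to_mat_dims)
  also have "\<dots> = lam j * u j $ idx i" using ij by (simp add: Umat_col tv_mult ev)
  also have "\<dots> = (\<Sum>k\<in>{0..<CARD('n)}. Umat u $$ (i, k) * Dmat CARD('n) lam $$ (k, j))"
  proof -
    have "(\<Sum>k\<in>{0..<CARD('n)}. Umat u $$ (i, k) * Dmat CARD('n) lam $$ (k, j))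
        = (\<Sum>k\<in>{0..<CARD('n)}. if k = j then u j $ idx i * lam j else 0)"
      using ij by (intro sum.cong) (auto simp: Umat_def Dmat_def)
    also have "\<dots> = u j $ idx i * lam j" using ij by simp
    finally show ?thesis by simp
  qed
  also have "\<dots> = (Umat u * Dmat CARD('n) lam) $$ (i, j)"
    using ij by (simp add: Dmat_def Umat_def scalar_prod_def row_def col_def)
  finally show "(to_mat H * Umat u) $$ (i, j) = (Umat u * Dmat CARD('n) lam) $$ (i, j)" .
qed (auto simp: Dmat_def to_mat_def)

lemma char_poly_diag:
  fixes u :: "nat \<Rightarrow> real^'n::finite" and H :: "real^'n^'n"
  assumes orth: "\<And>i j. i < CARD('n) \<Longrightarrow> j < CARD('n) \<Longrightarrow> inner (u i) (u j) = (if i = j then 1 else 0)"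
    and ev: "\<And>j. j < CARD('n) \<Longrightarrow> H *v u j = lam j *\<^sub>R u j"
  shows "char_poly (to_mat H) = (\<Prod>i<CARD('n). [:-lam i, 1:])"
proof -
  let ?n = "CARD('n)" let ?U = "Umat u" let ?D = "Dmat ?n lam"
  have U: "?U \<in> carrier_mat ?n ?n" and Ut: "transpose_mat ?U \<in> carrier_mat ?n ?n"
    and D: "?D \<in> carrier_mat ?n ?n" by (auto simp: Dmat_def)
  have "to_mat H = to_mat H * (?U * transpose_mat ?U)" using Umat_orth[OF orth] right_mult_one_mat[of "to_mat H" ?n ?n] by simp
  also have "\<dots> = (to_mat H * ?U) * transpose_mat ?U" using U Ut by (metis assoc_mult_mat to_mat_carrier)
  also have "\<dots> = ?U * ?D * transpose_mat ?U" using Umat_eig[OF ev] by simp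
  finally have eq: "to_mat H = ?U * ?D * transpose_mat ?U" .
  have "similar_mat (to_mat H) ?D"
    by (rule similar_matI[where n = "CARD('n)" and P = ?U and Q = "transpose_mat ?U"])
       (use U Ut D eq Umat_orth[OF orth] in auto)
  hence "char_poly (to_mat H) = char_poly ?D" by (rule char_poly_similar)
  also have "char_poly ?D = (\<Prod>a\<leftarrow>diag_mat ?D. [:- a, 1:])"
    by (rule char_poly_upper_triangular[OF D]) (auto simp: upper_triangular_def Dmat_def)
  also have "diag_mat ?D = map lam [0..<?n]"
    by (auto simp: diag_mat_def Dmat_def intro: nth_equalityI)
  also have "(\<Prod>a\<leftarrow>map lam [0..<?n]. [:- a, 1:]) = (\<Prod>i<?n. [:-lam i, 1:])"
    using prod.distinct_set_conv_list[of "[0..<?n]" "\<lambda>i. [:-lam i, 1:]"]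
    by (simp add: atLeast0LessThan o_def)
  finally show ?thesis .
qed



lemma sum_single:
  assumes "finite S" "j0 \<in> S" "\<And>j. j \<in> S \<Longrightarrow> j \<noteq> j0 \<Longrightarrow> g j = 0"
  shows "sum g S = g j0"
proof -
  have "sum g S = g j0 + sum g (S - {j0})" using assms(1,2) by (rule sum.remove)
  also have "sum g (S - {j0}) = 0" using assms(3) by (intro sum.neutral) auto
  finally show ?thesis by simp
qed

definition Kmat :: "nat \<Rightarrow> (nat \<Rightarrow> real) \<Rightarrow> real \<Rightarrow> 'a::real_field mat" where
  "Kmat n t \<beta> = mat (2*n) (2*n) (\<lambda>(i,j). if i < n then (if j = i then of_real (t i) else if j = n + i then of_real (-\<beta>) else 0)
      else (if j = i - n then 1 else 0))"

definition Wsmat :: "nat \<Rightarrow> nat \<Rightarrow> (nat \<Rightarrow> real) \<Rightarrow> 'a::real_field mat" where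
  "Wsmat n q mm = mat (2*n) (n+q) (\<lambda>(i,j). if i = j then (if j < q \<or> n \<le> j then 1 else of_real (mm j))
      else if i = n + j \<and> q \<le> j \<and> j < n then 1 else 0)"

definition Wumat :: "nat \<Rightarrow> nat \<Rightarrow> (nat \<Rightarrow> real) \<Rightarrow> 'a::real_field mat" where
  "Wumat n q mp = mat (2*n) (n - q) (\<lambda>(i,j). if i = q + j then of_real (mp (q+j)) else if i = n + q + j then 1 else 0)"

lemma Kmat_carrier[simp]: "Kmat n t \<beta> \<in> carrier_mat (2*n) (2*n)" by (simp add: Kmat_def)
lemma Wsmat_carrier[simp]: "Wsmat n q mm \<in> carrier_mat (2*n) (n+q)" by (simp add: Wsmat_def)
lemma Wumat_carrier[simp]: "Wumat n q mp \<in> carrier_mat (2*n) (n-q)" by (simp add: Wumat_def)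
lemma Kmat_dims[simp]: "dim_row (Kmat n t \<beta>) = 2*n" "dim_col (Kmat n t \<beta>) = 2*n" by (simp_all add: Kmat_def)
lemma Wsmat_dims[simp]: "dim_row (Wsmat n q mm) = 2*n" "dim_col (Wsmat n q mm) = n+q" by (simp_all add: Wsmat_def)
lemma Wumat_dims[simp]: "dim_row (Wumat n q mp) = 2*n" "dim_col (Wumat n q mp) = n-q" by (simp_all add: Wumat_def)

lemma map_Kmat: "map_mat (of_real :: real \<Rightarrow> complex) (Kmat n t \<beta>) = Kmat n t \<beta>"
  by (rule eq_matI) (auto simp: Kmat_def)
lemma map_Wsmat: "map_mat (of_real :: real \<Rightarrow> complex) (Wsmat n q mm) = Wsmat n q mm"
  by (rule eq_matI) (auto simp: Wsmat_def)
lemma map_Wumat: "map_mat (of_real :: real \<Rightarrow> complex) (Wumat n q mp) = Wumat n q mp"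
  by (rule eq_matI) (auto simp: Wumat_def)

lemma mult_vec_sum: "i < dim_row A \<Longrightarrow> dim_col A = m \<Longrightarrow> dim_vec c = m \<Longrightarrow> (A *\<^sub>v c) $ i = (\<Sum>j<m. A $$ (i,j) * c $ j)"
  by (simp add: scalar_prod_def row_def atLeast0LessThan)

lemma Ws_mult:
  fixes c :: "'a::real_field vec"
  assumes c: "c \<in> carrier_vec (n+q)" and q: "q \<le> n" and i: "i < 2*n"
  shows "(Wsmat n q mm *\<^sub>v c) $ i = (if i < n then (if i < q then c$i else of_real (mm i) * c$i)
      else if i < n+q then c$i else c$(i-n))"
proof -
  have e: "(Wsmat n q mm *\<^sub>v c) $ i = (\<Sum>j<n+q. Wsmat n q mm $$ (i,j) * c $ j)"
    using c i by (intro mult_vec_sum) auto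
  show ?thesis
  proof (cases "i < n+q")
    case True
    have "(\<Sum>j<n+q. Wsmat n q mm $$ (i,j) * c $ j) = Wsmat n q mm $$ (i,i) * c $ i"
      using True i by (intro sum_single) (auto simp: Wsmat_def)
    thus ?thesis using e True i by (auto simp: Wsmat_def)
  next
    case False
    have "(\<Sum>j<n+q. Wsmat n q mm $$ (i,j) * c $ j) = Wsmat n q mm $$ (i,i-n) * c $ (i-n)"
      using False i q by (intro sum_single) (auto simp: Wsmat_def)
    thus ?thesis using e False i q by (auto simp: Wsmat_def)
  qed
qed

lemma Wu_mult:
  fixes d :: "'a::real_field vec"
  assumes d: "d \<in> carrier_vec (n-q)" and q: "q \<le> n" and i: "i < 2*n"
  shows "(Wumat n q mp *\<^sub>v d) $ i = (if q \<le> i \<and> i < n then of_real (mp i) * d$(i-q)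
      else if n + q \<le> i then d$(i-n-q) else 0)"
proof -
  have e: "(Wumat n q mp *\<^sub>v d) $ i = (\<Sum>j<n-q. Wumat n q mp $$ (i,j) * d $ j)"
    using d i by (intro mult_vec_sum) auto
  consider "q \<le> i \<and> i < n" | "n + q \<le> i" | "\<not> (q \<le> i \<and> i < n) \<and> \<not> n + q \<le> i" by blast
  thus ?thesis
  proof cases
    case 1
    have "(\<Sum>j<n-q. Wumat n q mp $$ (i,j) * d $ j) = Wumat n q mp $$ (i,i-q) * d $ (i-q)"
      using 1 i by (intro sum_single) (auto simp: Wumat_def)
    thus ?thesis using e 1 i by (auto simp: Wumat_def)
  next
    case 2
    have "(\<Sum>j<n-q. Wumat n q mp $$ (i,j) * d $ j) = Wumat n q mp $$ (i,i-n-q) * d $ (i-n-q)"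
      using 2 i by (intro sum_single) (auto simp: Wumat_def)
    thus ?thesis using e 2 i by (auto simp: Wumat_def)
  next
    case 3
    have "(\<Sum>j<n-q. Wumat n q mp $$ (i,j) * d $ j) = 0"
      using 3 i by (intro sum.neutral) (auto simp: Wumat_def)
    thus ?thesis using e 3 i by auto
  qed
qed

lemma K_mult:
  fixes v :: "'a::real_field vec"
  assumes v: "v \<in> carrier_vec (2*n)" and i: "i < 2*n"
  shows "(Kmat n t \<beta> *\<^sub>v v) $ i = (if i < n then of_real (t i) * v$i - of_real \<beta> * v$(n+i) else v$(i-n))"
proof -
  have e: "(Kmat n t \<beta> *\<^sub>v v) $ i = (\<Sum>j<2*n. Kmat n t \<beta> $$ (i,j) * v $ j)"
    using v i by (intro mult_vec_sum) auto
  show ?thesis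
  proof (cases "i < n")
    case True
    have "(\<Sum>j<2*n. Kmat n t \<beta> $$ (i,j) * v $ j)
       = (\<Sum>j<2*n. (if j = i then of_real (t i) * v$i else 0) + (if j = n + i then - of_real \<beta> * v$(n+i) else 0))"
      using True by (intro sum.cong) (auto simp: Kmat_def)
    also have "\<dots> = of_real (t i) * v$i - of_real \<beta> * v$(n+i)"
      using True by (simp add: sum.distrib)
    finally show ?thesis using e True by simp
  next
    case False
    have "(\<Sum>j<2*n. Kmat n t \<beta> $$ (i,j) * v $ j) = Kmat n t \<beta> $$ (i,i-n) * v $ (i-n)"
      using False i by (intro sum_single) (auto simp: Kmat_def)
    thus ?thesis using e False i by (auto simp: Kmat_def)
  qed
qed

declare index_mult_mat_vec[simp del]

lemma Ws_fwd:
  fixes c :: "'a::real_field vec"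
  assumes c: "c \<in> carrier_vec (n+q)" and q: "q \<le> n" and k: "q \<le> k" "k < n"
  shows "(Wsmat n q mm *\<^sub>v c) $ k = of_real (mm k) * (Wsmat n q mm *\<^sub>v c) $ (n+k)"
  using k q by (simp add: Ws_mult[OF c q])

lemma Ws_bwd:
  fixes v :: "'a::real_field vec"
  assumes v: "v \<in> carrier_vec (2*n)" and q: "q \<le> n"
    and cond: "\<And>k. q \<le> k \<Longrightarrow> k < n \<Longrightarrow> v$k = of_real (mm k) * v$(n+k)"
  shows "v = Wsmat n q mm *\<^sub>v vec (n+q) (\<lambda>j. if j < q then v$j else if j < n then v$(n+j) else v$j)"
    (is "v = _ *\<^sub>v ?c")
proof (rule eq_vecI)
  have c: "?c \<in> carrier_vec (n+q)" by simp
  fix i assume "i < dim_vec (Wsmat n q mm *\<^sub>v ?c)"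
  hence i: "i < 2*n" by simp
  show "v $ i = (Wsmat n q mm *\<^sub>v ?c) $ i"
    using i q cond[of i] cond[of "i - n"] by (auto simp: Ws_mult[OF c q i])
qed (use v in simp)

lemma Wu_fwd:
  fixes d :: "'a::real_field vec"
  assumes d: "d \<in> carrier_vec (n-q)" and q: "q \<le> n"
  shows "\<And>k. k < q \<Longrightarrow> (Wumat n q mp *\<^sub>v d) $ k = 0"
    and "\<And>k. k < q \<Longrightarrow> (Wumat n q mp *\<^sub>v d) $ (n+k) = 0"
    and "\<And>k. q \<le> k \<Longrightarrow> k < n \<Longrightarrow> (Wumat n q mp *\<^sub>v d) $ k = of_real (mp k) * (Wumat n q mp *\<^sub>v d) $ (n+k)"
  using q by (auto simp: Wu_mult[OF d q])

lemma Wu_bwd: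
  fixes v :: "'a::real_field vec"
  assumes v: "v \<in> carrier_vec (2*n)" and q: "q \<le> n"
    and c0: "\<And>k. k < q \<Longrightarrow> v$k = 0" and c1: "\<And>k. k < q \<Longrightarrow> v$(n+k) = 0"
    and cond: "\<And>k. q \<le> k \<Longrightarrow> k < n \<Longrightarrow> v$k = of_real (mp k) * v$(n+k)"
  shows "v = Wumat n q mp *\<^sub>v vec (n-q) (\<lambda>j. v$(n+q+j))"
    (is "v = _ *\<^sub>v ?d")
proof (rule eq_vecI)
  have d: "?d \<in> carrier_vec (n-q)" by simp
  fix i assume "i < dim_vec (Wumat n q mp *\<^sub>v ?d)"
  hence i: "i < 2*n" by simp
  show "v $ i = (Wumat n q mp *\<^sub>v ?d) $ i"
    using i q cond[of i] c0[of i] c1[of "i - n"] by (auto simp: Wu_mult[OF d q i])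
qed (use v in simp)

lemma K_pres_Ws:
  fixes v :: "'a::real_field vec"
  assumes v: "v \<in> carrier_vec (2*n)"
    and cond: "\<And>k. q \<le> k \<Longrightarrow> k < n \<Longrightarrow> v$k = of_real (mm k) * v$(n+k)"
    and quad: "\<And>k. q \<le> k \<Longrightarrow> k < n \<Longrightarrow> (mm k)^2 - t k * mm k + \<beta> = 0"
    and k: "q \<le> k" "k < n"
  shows "(Kmat n t \<beta> *\<^sub>v v)$k = of_real (mm k) * (Kmat n t \<beta> *\<^sub>v v)$(n+k)"
proof -
  have q: "t k * mm k - \<beta> = mm k * mm k" using quad[OF k] by (simp add: power2_eq_square)
  have "(Kmat n t \<beta> *\<^sub>v v)$k = of_real (t k) * v$k - of_real \<beta> * v$(n+k)"
    using k by (simp add: K_mult[OF v])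
  also have "\<dots> = of_real (t k * mm k - \<beta>) * v$(n+k)"
    using cond[OF k] by (simp add: algebra_simps)
  also have "\<dots> = of_real (mm k) * (of_real (mm k) * v$(n+k))" unfolding q by (simp add: algebra_simps)
  also have "\<dots> = of_real (mm k) * (Kmat n t \<beta> *\<^sub>v v)$(n+k)"
    using k cond[OF k] by (simp add: K_mult[OF v])
  finally show ?thesis .
qed

lemma K_zero_part:
  fixes v :: "'a::real_field vec"
  assumes v: "v \<in> carrier_vec (2*n)" and k: "k < n" and z: "v$k = 0" "v$(n+k) = 0"
  shows "(Kmat n t \<beta> *\<^sub>v v)$k = 0" "(Kmat n t \<beta> *\<^sub>v v)$(n+k) = 0"
  using k z by (simp_all add: K_mult[OF v])

lemma K_eigen:
  fixes v :: "'a::real_field vec"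
  assumes v: "v \<in> carrier_vec (2*n)" and nz: "v \<noteq> 0\<^sub>v (2*n)" and e: "Kmat n t \<beta> *\<^sub>v v = \<mu> \<cdot>\<^sub>v v"
  shows "\<exists>k<n. v$(n+k) \<noteq> 0 \<and> v$k = \<mu> * v$(n+k) \<and> \<mu>^2 - of_real (t k) * \<mu> + of_real \<beta> = 0"
proof -
  have a: "v$k = \<mu> * v$(n+k)" if "k < n" for k
  proof -
    have "(Kmat n t \<beta> *\<^sub>v v)$(n+k) = v$k" using that by (simp add: K_mult[OF v])
    moreover have "(Kmat n t \<beta> *\<^sub>v v)$(n+k) = \<mu> * v$(n+k)" using e v that by simp
    ultimately show ?thesis by simp
  qed
  have "\<exists>k<n. v$(n+k) \<noteq> 0"
  proof (rule ccontr)
    assume "\<not> ?thesis"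
    hence z: "\<And>k. k < n \<Longrightarrow> v$(n+k) = 0" by auto
    have "v = 0\<^sub>v (2*n)"
    proof (rule eq_vecI)
      fix i assume "i < dim_vec (0\<^sub>v (2*n) :: 'a vec)"
      hence i: "i < 2*n" by simp
      show "v $ i = 0\<^sub>v (2*n) $ i"
      proof (cases "i < n")
        case True thus ?thesis using a[OF True] z[OF True] i by simp
      next
        case False thus ?thesis using z[of "i - n"] i by simp
      qed
    qed (use v in simp)
    thus False using nz by simp
  qed
  then obtain k where k: "k < n" "v$(n+k) \<noteq> 0" by blast
  have "(Kmat n t \<beta> *\<^sub>v v)$k = of_real (t k) * v$k - of_real \<beta> * v$(n+k)"
    using k by (simp add: K_mult[OF v])
  moreover have "(Kmat n t \<beta> *\<^sub>v v)$k = \<mu> * v$k" using e v k by simp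
  ultimately have "(\<mu>^2 - of_real (t k) * \<mu> + of_real \<beta>) * v$(n+k) = 0"
    using a[OF k(1)] by (simp add: algebra_simps power2_eq_square)
  thus ?thesis using k a[OF k(1)] by auto
qed

lemma sum_split_add: "(\<Sum>j<a+(b::nat). g j) = (\<Sum>j<a. g j) + (\<Sum>j<b. g (a+j))"
  by (induction b) (auto simp: add_ac)

lemma hcat_mult:
  assumes A: "A \<in> carrier_mat m a" and B: "B \<in> carrier_mat m b" and x: "x \<in> carrier_vec (a+b)" and i: "i < m"
  shows "(hcat A B *\<^sub>v x) $ i = (A *\<^sub>v vec a (\<lambda>j. x$j)) $ i + (B *\<^sub>v vec b (\<lambda>j. x$(a+j))) $ i"
proof -
  have "(hcat A B *\<^sub>v x) $ i = (\<Sum>j<a+b. hcat A B $$ (i,j) * x $ j)"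
    using A B x i by (intro mult_vec_sum) (auto simp: hcat_def)
  also have "\<dots> = (\<Sum>j<a. A $$ (i,j) * x $ j) + (\<Sum>j<b. B $$ (i,j) * x $ (a+j))"
    unfolding sum_split_add using A B i by (auto simp: hcat_def intro!: arg_cong2[where f="(+)"] sum.cong)
  also have "\<dots> = (A *\<^sub>v vec a (\<lambda>j. x$j)) $ i + (B *\<^sub>v vec b (\<lambda>j. x$(a+j))) $ i"
    using A B i by (simp add: mult_vec_sum[where m=a] mult_vec_sum[where m=b] del: index_mult_mat_vec)
  finally show ?thesis .
qed

lemma kernel_invertible:
  fixes A :: "real mat"
  assumes A: "A \<in> carrier_mat m m" and ker: "\<And>v. v \<in> carrier_vec m \<Longrightarrow> A *\<^sub>v v = 0\<^sub>v m \<Longrightarrow> v = 0\<^sub>v m"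
  shows "invertible_mat A"
proof -
  have "det A \<noteq> 0" using det_0_iff_vec_prod_zero[OF A] ker by blast
  from det_non_zero_imp_unit[OF A this, of undefined]
  obtain B where B: "B \<in> carrier_mat m m" "B * A = 1\<^sub>m m" "A * B = 1\<^sub>m m"
    unfolding Units_def ring_mat_def by auto
  show ?thesis unfolding invertible_mat_def inverts_mat_def
    using A B by (intro conjI exI[of _ B]) auto
qed

lemma hcat_kernel:
  fixes x :: "real vec"
  assumes q: "q \<le> n" and x: "x \<in> carrier_vec (2*n)"
    and ne: "\<And>k. q \<le> k \<Longrightarrow> k < n \<Longrightarrow> mp k \<noteq> mm k"
    and z: "hcat (Wsmat n q mm) (Wumat n q mp) *\<^sub>v x = 0\<^sub>v (2*n)"
  shows "x = 0\<^sub>v (2*n)"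
proof -
  define c :: "real vec" where "c = vec (n+q) (\<lambda>j. x$j)"
  define d :: "real vec" where "d = vec (n-q) (\<lambda>j. x$(n+q+j))"
  have c: "c \<in> carrier_vec (n+q)" and d: "d \<in> carrier_vec (n-q)" by (auto simp: c_def d_def)
  have x': "x \<in> carrier_vec ((n+q)+(n-q))" using x q by (simp add: mult_2)
  have eq: "(Wsmat n q mm *\<^sub>v c) $ i + (Wumat n q mp *\<^sub>v d) $ i = 0" if i: "i < 2*n" for i
  proof -
    have "(hcat (Wsmat n q mm) (Wumat n q mp) *\<^sub>v x) $ i = 0" using z i by simp
    thus ?thesis using hcat_mult[OF Wsmat_carrier Wumat_carrier x' i] by (simp add: c_def d_def)
  qed
  have A: "c$k = 0 \<and> c$(n+k) = 0" if "k < q" for k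
    using eq[of k] eq[of "n+k"] that q
    by (simp add: Ws_mult[OF c q] Wu_mult[OF d q])
  have B: "c$k = 0 \<and> d$(k-q) = 0" if "q \<le> k" "k < n" for k
  proof -
    have e1: "mm k * c$k + mp k * d$(k-q) = 0" using eq[of k] that
      by (simp add: Ws_mult[OF c q] Wu_mult[OF d q])
    have e2: "c$k + d$(k-q) = 0" using eq[of "n+k"] that
      by (simp add: Ws_mult[OF c q] Wu_mult[OF d q])
    have ce: "c$k = - d$(k-q)" using e2 by simp
    have m1: "mm k * c$k = - (mm k * d$(k-q))" unfolding ce by simp
    have m2: "(mp k - mm k) * d$(k-q) = mp k * d$(k-q) - mm k * d$(k-q)" by (simp add: left_diff_distrib)
    have "(mp k - mm k) * d$(k-q) = 0" using e1 m1 m2 by linarith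
    hence "d$(k-q) = 0" using ne[OF that] by simp
    thus ?thesis using e2 by simp
  qed
  show ?thesis
  proof (rule eq_vecI)
    fix j assume "j < dim_vec (0\<^sub>v (2*n) :: real vec)"
    hence j: "j < 2*n" by simp
    show "x $ j = 0\<^sub>v (2 * n) $ j"
    proof (cases "j < n+q")
      case True
      hence xj: "x$j = c$j" by (simp add: c_def)
      show ?thesis
      proof (cases "j < n")
        case True thus ?thesis using xj A[of j] B[of j] j by (cases "j < q") auto
      next
        case False thus ?thesis using xj A[of "j-n"] \<open>j < n+q\<close> j by auto
      qed
    next
      case False
      hence "x$j = d$(j-n-q)" using j q by (simp add: d_def)
      moreover have "d$((j-n)-q) = 0" using B[of "j-n"] False j by auto
      ultimately show ?thesis using j by (simp add: diff_diff_add)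
    qed
  qed (use x in simp)
qed

lemma DG_comm:
  fixes Hm U Dm :: "'a::comm_ring_1 mat"
  assumes Hm: "Hm \<in> carrier_mat n n" and U: "U \<in> carrier_mat n n" and Dm: "Dm \<in> carrier_mat n n"
    and HU: "Hm * U = U * Dm"
  shows "four_block_mat ((1 + b) \<cdot>\<^sub>m 1\<^sub>m n - a \<cdot>\<^sub>m Hm) ((- b) \<cdot>\<^sub>m 1\<^sub>m n) (1\<^sub>m n) (0\<^sub>m n n)
       * four_block_mat U (0\<^sub>m n n) (0\<^sub>m n n) U
     = four_block_mat U (0\<^sub>m n n) (0\<^sub>m n n) U
       * four_block_mat ((1 + b) \<cdot>\<^sub>m 1\<^sub>m n - a \<cdot>\<^sub>m Dm) ((- b) \<cdot>\<^sub>m 1\<^sub>m n) (1\<^sub>m n) (0\<^sub>m n n)"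
proof -
  let ?A1 = "(1 + b) \<cdot>\<^sub>m 1\<^sub>m n - a \<cdot>\<^sub>m Hm" and ?K1 = "(1 + b) \<cdot>\<^sub>m 1\<^sub>m n - a \<cdot>\<^sub>m Dm"
  have A1: "?A1 \<in> carrier_mat n n" and K1: "?K1 \<in> carrier_mat n n" using Hm Dm by auto
  have one: "(1\<^sub>m n :: 'a mat) \<in> carrier_mat n n" and zero: "(0\<^sub>m n n :: 'a mat) \<in> carrier_mat n n"
    and mb: "(- b) \<cdot>\<^sub>m 1\<^sub>m n \<in> carrier_mat n n" by auto
  have b1: "?A1 * U = U * ?K1"
  proof -
    have "?A1 * U = (1 + b) \<cdot>\<^sub>m 1\<^sub>m n * U - a \<cdot>\<^sub>m Hm * U"
      using Hm U by (intro minus_mult_distrib_mat) auto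
    also have "\<dots> = (1 + b) \<cdot>\<^sub>m U - a \<cdot>\<^sub>m (Hm * U)"
      using Hm U by (simp add: mult_smult_assoc_mat[OF one U] mult_smult_assoc_mat[OF Hm U])
    also have "\<dots> = (1 + b) \<cdot>\<^sub>m U - a \<cdot>\<^sub>m (U * Dm)" using HU by simp
    also have "\<dots> = U * ((1 + b) \<cdot>\<^sub>m 1\<^sub>m n) - U * (a \<cdot>\<^sub>m Dm)"
      using Dm U by (simp add: mult_smult_distrib[OF U one] mult_smult_distrib[OF U Dm])
    also have "\<dots> = U * ?K1"
      using Dm U by (intro mult_minus_distrib_mat[symmetric]) auto
    finally show ?thesis .
  qed
  have l: "four_block_mat ?A1 ((- b) \<cdot>\<^sub>m 1\<^sub>m n) (1\<^sub>m n) (0\<^sub>m n n) * four_block_mat U (0\<^sub>m n n) (0\<^sub>m n n) U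
     = four_block_mat (?A1 * U + (- b) \<cdot>\<^sub>m 1\<^sub>m n * 0\<^sub>m n n) (?A1 * 0\<^sub>m n n + (- b) \<cdot>\<^sub>m 1\<^sub>m n * U)
         (1\<^sub>m n * U + 0\<^sub>m n n * 0\<^sub>m n n) (1\<^sub>m n * 0\<^sub>m n n + 0\<^sub>m n n * U)"
    by (rule mult_four_block_mat[OF A1 mb one zero U zero zero U])
  have r: "four_block_mat U (0\<^sub>m n n) (0\<^sub>m n n) U * four_block_mat ?K1 ((- b) \<cdot>\<^sub>m 1\<^sub>m n) (1\<^sub>m n) (0\<^sub>m n n)
     = four_block_mat (U * ?K1 + 0\<^sub>m n n * 1\<^sub>m n) (U * ((- b) \<cdot>\<^sub>m 1\<^sub>m n) + 0\<^sub>m n n * 0\<^sub>m n n)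
         (0\<^sub>m n n * ?K1 + U * 1\<^sub>m n) (0\<^sub>m n n * ((- b) \<cdot>\<^sub>m 1\<^sub>m n) + U * 0\<^sub>m n n)"
    by (rule mult_four_block_mat[OF U zero zero U K1 mb one zero])
  have e1: "?A1 * U + (- b) \<cdot>\<^sub>m 1\<^sub>m n * 0\<^sub>m n n = U * ?K1 + 0\<^sub>m n n * 1\<^sub>m n"
    using b1 U K1 A1 by simp
  have e2: "?A1 * 0\<^sub>m n n + (- b) \<cdot>\<^sub>m 1\<^sub>m n * U = U * ((- b) \<cdot>\<^sub>m 1\<^sub>m n) + 0\<^sub>m n n * 0\<^sub>m n n"
    using U A1 by (simp add: mult_smult_assoc_mat[OF one U] mult_smult_distrib[OF U one] right_mult_zero_mat[OF A1])
  have e3: "1\<^sub>m n * U + 0\<^sub>m n n * 0\<^sub>m n n = 0\<^sub>m n n * ?K1 + U * 1\<^sub>m n"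
    using U K1 by (simp add: left_mult_zero_mat[OF K1])
  have e4: "1\<^sub>m n * 0\<^sub>m n n + 0\<^sub>m n n * U = 0\<^sub>m n n * ((- b) \<cdot>\<^sub>m 1\<^sub>m n) + (U * 0\<^sub>m n n :: 'a mat)"
    using U by simp
  show ?thesis unfolding l r e1 e2 e3 e4 ..
qed



lemma quad_small:
  fixes \<mu> :: complex and t \<beta> :: real
  assumes e: "\<mu>^2 - of_real t * \<mu> + of_real \<beta> = 0"
    and b: "0 < \<beta>" "\<beta> < 1" and t: "-(1+\<beta>) < t" "t \<le> 1+\<beta>"
  shows "cmod \<mu> \<le> 1"
proof -
  define x where "x = Re \<mu>" define y where "y = Im \<mu>"
  have re: "x^2 - y^2 - t * x + \<beta> = 0"
    using arg_cong[OF e, of Re] by (simp add: x_def y_def power2_eq_square)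
  have im: "2 * x * y - t * y = 0"
    using arg_cong[OF e, of Im] by (simp add: x_def y_def power2_eq_square)
  have "x^2 + y^2 \<le> 1"
  proof (cases "y = 0")
    case True
    hence r: "x^2 - t * x + \<beta> = 0" using re by simp
    have "\<bar>x\<bar> \<le> 1"
    proof (rule ccontr)
      assume "\<not> \<bar>x\<bar> \<le> 1"
      hence "x > 1 \<or> x < -1" by auto
      thus False
      proof
        assume x: "x > 1"
        have "x^2 + \<beta> - (1+\<beta>) * x = (x - 1) * (x - \<beta>)" by (simp add: algebra_simps power2_eq_square)
        moreover have "(x - 1) * (x - \<beta>) > 0" using x b by simp
        moreover have "t * x \<le> (1+\<beta>) * x" using t x by (simp add: mult_right_mono)
        ultimately show False using r by linarith
      next
        assume x: "x < -1"
        have "x^2 + \<beta> + (1+\<beta>) * x = (x + 1) * (x + \<beta>)" by (simp add: algebra_simps power2_eq_square)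
        moreover have "(x + 1) * (x + \<beta>) > 0" using x b by (simp add: mult_neg_neg)
        moreover have "- t * x \<ge> (1+\<beta>) * x"
        proof -
          have "(-t) * (-x) \<le> (1+\<beta>) * (-x)" using t x by (intro mult_right_mono) auto
          thus ?thesis by simp
        qed
        ultimately show False using r by linarith
      qed
    qed
    hence "x^2 \<le> 1" by (simp add: abs_le_square_iff[of x 1, simplified] power2_eq_square abs_square_le_1)
    thus ?thesis using True by simp
  next
    case False
    hence "t = 2 * x" using im by (simp add: algebra_simps)
    hence "x^2 + y^2 = \<beta>" using re by (simp add: power2_eq_square algebra_simps)
    thus ?thesis using b by simp
  qed
  moreover have "cmod \<mu> = sqrt (x^2 + y^2)" by (simp add: cmod_def x_def y_def)
  ultimately show ?thesis by simp
qed

definition mroot :: "real \<Rightarrow> real \<Rightarrow> real" where "mroot t \<beta> = (t - sqrt (t^2 - 4*\<beta>)) / 2"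
definition proot :: "real \<Rightarrow> real \<Rightarrow> real" where "proot t \<beta> = (t + sqrt (t^2 - 4*\<beta>)) / 2"

lemma roots_big_t:
  assumes b: "0 < \<beta>" "\<beta> < 1" and t: "t > 1 + \<beta>"
  shows "(mroot t \<beta>)^2 - t * mroot t \<beta> + \<beta> = 0" "(proot t \<beta>)^2 - t * proot t \<beta> + \<beta> = 0"
    "0 < mroot t \<beta>" "mroot t \<beta> < 1" "1 < proot t \<beta>" "proot t \<beta> \<noteq> mroot t \<beta>"
proof -
  define s where "s = sqrt (t^2 - 4*\<beta>)"
  have d: "t^2 - 4*\<beta> > (t - 2)^2" using t by (simp add: power2_eq_square algebra_simps)
  have d0: "t^2 - 4*\<beta> \<ge> 0" using d zero_le_power2[of "t - 2"] by linarith
  have s2: "s^2 = t^2 - 4*\<beta>" using d0 by (simp add: s_def)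
  have s0: "s \<ge> 0" using d0 by (simp add: s_def)
  have s1: "s > \<bar>t - 2\<bar>"
  proof -
    have "sqrt ((t-2)^2) < s" unfolding s_def using d by (rule real_sqrt_less_mono)
    thus ?thesis by simp
  qed
  have st: "s < t"
  proof -
    have "s < sqrt (t^2)" unfolding s_def using b by (intro real_sqrt_less_mono) simp
    thus ?thesis using t b by simp
  qed
  show "(mroot t \<beta>)^2 - t * mroot t \<beta> + \<beta> = 0" "(proot t \<beta>)^2 - t * proot t \<beta> + \<beta> = 0"
    unfolding mroot_def proot_def s_def[symmetric] using s2
    by (simp_all add: power2_eq_square field_simps)
  have a1: "t - s < 2" using s1 by linarith
  have a2: "t + s > 2" using s1 by linarith
  show "0 < mroot t \<beta>" "mroot t \<beta> < 1" "1 < proot t \<beta>" "proot t \<beta> \<noteq> mroot t \<beta>"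
    unfolding mroot_def proot_def s_def[symmetric] using st a1 a2 by simp_all
qed





lemma tv_scale: "tv (c *\<^sub>R (x::real^'n::finite)) = c \<cdot>\<^sub>v tv x"
  by (rule eq_vecI) (auto simp: tv_def)

lemma hcat_mult_left:
  fixes T A B :: "'a::semiring_1 mat"
  assumes T: "T \<in> carrier_mat m m" and A: "A \<in> carrier_mat m a" and B: "B \<in> carrier_mat m b"
  shows "hcat (T * A) (T * B) = T * hcat A B"
proof -
  have col: "col (hcat A B) j = (if j < a then col A j else col B (j - a))" if "j < a + b" for j
    using A B that by (auto simp: hcat_def col_def intro!: eq_vecI)
  show ?thesis
  proof (rule eq_matI)
    fix i j assume "i < dim_row (T * hcat A B)" "j < dim_col (T * hcat A B)"
    hence ij: "i < m" "j < a + b" using T A B by (auto simp: hcat_def)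
    show "hcat (T * A) (T * B) $$ (i, j) = (T * hcat A B) $$ (i, j)"
      using ij T A B col[OF ij(2)] by (auto simp: hcat_def)
  qed (use T A B in \<open>auto simp: hcat_def\<close>)
qed

lemma block_inv:
  fixes U Ut :: "'a::semiring_1 mat"
  assumes U: "U \<in> carrier_mat n n" and Ut: "Ut \<in> carrier_mat n n" and UtU: "Ut * U = 1\<^sub>m n"
  shows "four_block_mat Ut (0\<^sub>m n n) (0\<^sub>m n n) Ut * four_block_mat U (0\<^sub>m n n) (0\<^sub>m n n) U = 1\<^sub>m (n+n)"
proof -
  have z: "(0\<^sub>m n n :: 'a mat) \<in> carrier_mat n n" by simp
  have "four_block_mat Ut (0\<^sub>m n n) (0\<^sub>m n n) Ut * four_block_mat U (0\<^sub>m n n) (0\<^sub>m n n) U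
     = four_block_mat (Ut * U + 0\<^sub>m n n * 0\<^sub>m n n) (Ut * 0\<^sub>m n n + 0\<^sub>m n n * U)
         (0\<^sub>m n n * U + Ut * 0\<^sub>m n n) (0\<^sub>m n n * 0\<^sub>m n n + Ut * U)"
    by (rule mult_four_block_mat[OF Ut z z Ut U z z U])
  also have "\<dots> = four_block_mat (1\<^sub>m n) (0\<^sub>m n n) (0\<^sub>m n n) (1\<^sub>m n)"
    using U Ut UtU by simp
  finally show ?thesis by simp
qed

lemma mat_vec_zero: "A \<in> carrier_mat m k \<Longrightarrow> A *\<^sub>v 0\<^sub>v k = (0\<^sub>v m :: 'a::semiring_0 vec)"
  by (rule eq_vecI) (auto simp: scalar_prod_def index_mult_mat_vec)

lemma eig_transfer:
  fixes T T' DGc Kc W :: "complex mat"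
  assumes T: "T \<in> carrier_mat m m" and T': "T' \<in> carrier_mat m m" and DGc: "DGc \<in> carrier_mat m m"
    and Kc: "Kc \<in> carrier_mat m m" and W: "W \<in> carrier_mat m k"
    and inv: "T' * T = 1\<^sub>m m" and comm: "DGc * T = T * Kc"
    and x: "x \<in> carrier_vec k" and nz: "(T * W) *\<^sub>v x \<noteq> 0\<^sub>v m"
    and e: "DGc *\<^sub>v ((T * W) *\<^sub>v x) = \<mu> \<cdot>\<^sub>v ((T * W) *\<^sub>v x)"
  shows "W *\<^sub>v x \<in> carrier_vec m \<and> W *\<^sub>v x \<noteq> 0\<^sub>v m \<and> Kc *\<^sub>v (W *\<^sub>v x) = \<mu> \<cdot>\<^sub>v (W *\<^sub>v x)"
proof -
  define w where "w = W *\<^sub>v x"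
  have w: "w \<in> carrier_vec m" using W x by (simp add: w_def)
  have Tw: "(T * W) *\<^sub>v x = T *\<^sub>v w" using T W x by (simp add: w_def)
  have bk: "T' *\<^sub>v (T *\<^sub>v y) = y" if "y \<in> carrier_vec m" for y
  proof -
    have "T' *\<^sub>v (T *\<^sub>v y) = (T' * T) *\<^sub>v y" using T T' that by simp
    thus ?thesis using inv that by simp
  qed
  have "w \<noteq> 0\<^sub>v m"
  proof
    assume "w = 0\<^sub>v m"
    hence "T *\<^sub>v w = 0\<^sub>v m" using mat_vec_zero[OF T] by simp
    thus False using nz Tw by simp
  qed
  moreover have "Kc *\<^sub>v w = \<mu> \<cdot>\<^sub>v w"
  proof -
    have "DGc *\<^sub>v (T *\<^sub>v w) = (DGc * T) *\<^sub>v w" using DGc T w by simp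
    also have "\<dots> = (T * Kc) *\<^sub>v w" using comm by simp
    also have "\<dots> = T *\<^sub>v (Kc *\<^sub>v w)" using T Kc w by simp
    finally have "T *\<^sub>v (Kc *\<^sub>v w) = T *\<^sub>v (\<mu> \<cdot>\<^sub>v w)"
      using e Tw mult_mat_vec[OF T w] by simp
    hence "T' *\<^sub>v (T *\<^sub>v (Kc *\<^sub>v w)) = T' *\<^sub>v (T *\<^sub>v (\<mu> \<cdot>\<^sub>v w))" by simp
    thus ?thesis using bk Kc w by simp
  qed
  ultimately show ?thesis using w by (simp add: w_def)
qed

lemma inv_transfer:
  fixes T DGr K W :: "real mat"
  assumes T: "T \<in> carrier_mat m m" and DGr: "DGr \<in> carrier_mat m m"
    and K: "K \<in> carrier_mat m m" and W: "W \<in> carrier_mat m k"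
    and comm: "DGr * T = T * K" and c: "c \<in> carrier_vec k" and d: "d \<in> carrier_vec k"
    and Kw: "K *\<^sub>v (W *\<^sub>v c) = W *\<^sub>v d"
  shows "DGr *\<^sub>v ((T * W) *\<^sub>v c) = (T * W) *\<^sub>v d"
proof -
  have w: "W *\<^sub>v c \<in> carrier_vec m" using W c by simp
  have "DGr *\<^sub>v ((T * W) *\<^sub>v c) = (DGr * T) *\<^sub>v (W *\<^sub>v c)" using T W c DGr by simp
  also have "\<dots> = (T * K) *\<^sub>v (W *\<^sub>v c)" using comm by simp
  also have "\<dots> = T *\<^sub>v (W *\<^sub>v d)" using T K w Kw by simp
  also have "\<dots> = (T * W) *\<^sub>v d" using T W d by simp
  finally show ?thesis .
qed

theorem theorem2p4:
  fixes f :: "real^'n \<Rightarrow> real" and xstar :: "real^'n"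
    and r p :: nat and L \<alpha> \<beta> lam1 :: real
  assumes "r \<ge> 1"
    and "Ck (r + 1) f"
    and "L-lipschitz_on UNIV (grad f)"
    and "grad f xstar = 0"
    and "1 \<le> p" and "p < CARD('n)"
    and "neg_eig_count (to_mat (hess f xstar)) = p"
    and "eigenvalue (to_mat (hess f xstar)) lam1"
    and "\<forall>\<mu>. eigenvalue (to_mat (hess f xstar)) \<mu> \<longrightarrow> \<mu> \<le> lam1"
    and "lam1 > 0"
    and "0 < \<alpha>" and "\<alpha> < 4 / lam1"
    and "max (-1 + \<alpha> * lam1 / 2) 0 < \<beta>" and "\<beta> < 1"
  shows "\<exists>Vs Vu.
     Vs \<in> carrier_mat (2 * CARD('n)) (2 * CARD('n) - p) \<and>
     Vu \<in> carrier_mat (2 * CARD('n)) p \<and>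
     invertible_mat (hcat Vs Vu) \<and>
     col_space_invariant (DG \<alpha> \<beta> (to_mat (hess f xstar))) Vs \<and>
     (\<forall>\<mu>. restr_eigenvalue (DG \<alpha> \<beta> (to_mat (hess f xstar))) Vs \<mu> \<longrightarrow> cmod \<mu> \<le> 1) \<and>
     col_space_invariant (DG \<alpha> \<beta> (to_mat (hess f xstar))) Vu \<and>
     (\<forall>\<mu>. restr_eigenvalue (DG \<alpha> \<beta> (to_mat (hess f xstar))) Vu \<mu> \<longrightarrow> cmod \<mu> > 1)"
proof -
  note assms_all = assms
  define n where "n = CARD('n)"
  define H where "H = hess f xstar"
  define Hm where "Hm = to_mat H"
  have sym: "H $ i $ j = H $ j $ i" for i j
    unfolding H_def hess_def using pd_sym[OF assms(2)] assms(1) by simp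
  obtain u lam where S0: "\<forall>j<CARD('n). norm (u j) = 1 \<and> H *v u j = lam j *\<^sub>R u j"
    "\<forall>i<CARD('n). \<forall>j<CARD('n). i \<noteq> j \<longrightarrow> inner (u i) (u j) = 0"
    "\<forall>i j. i \<le> j \<longrightarrow> j < CARD('n) \<longrightarrow> lam j \<le> lam i"
    using spectral_sorted[OF sym] by (elim exE conjE) (rule that; assumption)
  note S = S0[folded n_def]
  have orth: "inner (u i) (u j) = (if i = j then 1 else 0)" if "i < CARD('n)" "j < CARD('n)" for i j
  proof (cases "i = j")
    case True
    hence "norm (u j) = 1" using S(1) that by (auto simp: n_def)
    thus ?thesis using True by (simp add: power2_norm_eq_inner[symmetric])
  qed (use S(2) that n_def in auto)
  have ev: "H *v u j = lam j *\<^sub>R u j" if "j < CARD('n)" for j using S(1) that n_def by auto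
  have cp: "char_poly Hm = (\<Prod>i<n. [:-lam i, 1:])"
    unfolding Hm_def n_def by (rule char_poly_diag[OF orth ev])
  have cardN: "card {i. i < n \<and> lam i < 0} = p"
    using assms(7) neg_count_prod[of lam n] cp unfolding neg_eig_count_def Hm_def H_def by simp
  define q where "q = n - p"
  have pn: "p < n" using assms(6) n_def by simp
  have neg_iff: "lam j < 0 \<longleftrightarrow> q \<le> j" if j: "j < n" for j
  proof
    assume lj: "lam j < 0"
    show "q \<le> j"
    proof (rule ccontr)
      assume "\<not> q \<le> j"
      have "{j..<n} \<subseteq> {i. i < n \<and> lam i < 0}"
      proof
        fix i assume i: "i \<in> {j..<n}"
        hence "lam i \<le> lam j" using S(3)[rule_format, of j i] by auto
        thus "i \<in> {i. i < n \<and> lam i < 0}" using i lj by auto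
      qed
      hence "card {j..<n} \<le> card {i. i < n \<and> lam i < 0}" by (intro card_mono) auto
      hence "card {j..<n} \<le> p" using cardN by simp
      thus False using \<open>\<not> q \<le> j\<close> q_def pn by simp
    qed
  next
    assume qj: "q \<le> j"
    show "lam j < 0"
    proof (rule ccontr)
      assume "\<not> lam j < 0"
      have "{i. i < n \<and> lam i < 0} \<subseteq> {Suc j..<n}"
      proof
        fix i assume i: "i \<in> {i. i < n \<and> lam i < 0}"
        have "\<not> i \<le> j"
        proof
          assume "i \<le> j"
          hence "lam j \<le> lam i" using S(3)[rule_format, of i j] j by auto
          thus False using i \<open>\<not> lam j < 0\<close> by auto
        qed
        thus "i \<in> {Suc j..<n}" using i by auto
      qed
      hence "card {i. i < n \<and> lam i < 0} \<le> card {Suc j..<n}" by (intro card_mono) auto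
      hence "p \<le> card {Suc j..<n}" using cardN by simp
      thus False using qj q_def pn j by simp
    qed
  qed
  have eig_le: "lam j \<le> lam1" if "j < n" for j
  proof -
    have "eigenvector Hm (tv (u j)) (lam j)"
      unfolding eigenvector_def Hm_def
    proof (intro conjI)
      show "tv (u j) \<in> carrier_vec (dim_row (to_mat H))" by simp
      show "tv (u j) \<noteq> 0\<^sub>v (dim_row (to_mat H))"
        using tv_eq_0[of "u j"] S(1) that by (auto simp: n_def)
      show "to_mat H *\<^sub>v tv (u j) = lam j \<cdot>\<^sub>v tv (u j)"
        using tv_mult[of H "u j"] ev[of j] that by (simp add: n_def tv_scale)
    qed
    hence "eigenvalue Hm (lam j)" unfolding eigenvalue_def by blast
    thus ?thesis using assms(9) unfolding Hm_def H_def by blast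
  qed
  have nq: "q \<le> n" "n + q = 2 * CARD('n) - p" "n - q = p" using pn by (auto simp: q_def n_def)
  have bmax: "-1 + \<alpha> * lam1 / 2 < \<beta>" "0 < \<beta>" using assms(13) by auto
  have a0: "0 < \<alpha>" and b1: "\<beta> < 1" using assms(11,14) by auto
  define tt where "tt k = 1 + \<beta> - \<alpha> * lam k" for k
  define mm where "mm k = mroot (tt k) \<beta>" for k
  define mp where "mp k = proot (tt k) \<beta>" for k
  have big: "tt k > 1 + \<beta>" if "q \<le> k" "k < n" for k
  proof -
    have "lam k < 0" using neg_iff[of k] that by simp
    hence "\<alpha> * lam k < 0" using a0 by (simp add: mult_pos_neg)
    thus ?thesis by (simp add: tt_def)
  qed
  have R: "(mm k)^2 - tt k * mm k + \<beta> = 0" "(mp k)^2 - tt k * mp k + \<beta> = 0"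
    "0 < mm k" "mm k < 1" "1 < mp k" "mp k \<noteq> mm k" if "q \<le> k" "k < n" for k
    using roots_big_t[OF bmax(2) b1 big[OF that]] unfolding mm_def mp_def by auto
  have small: "-(1+\<beta>) < tt k" "tt k \<le> 1+\<beta>" if "k < q" for k
  proof -
    have kn: "k < n" using that nq by simp
    have l0: "lam k \<ge> 0" using neg_iff[OF kn] that by simp
    have "\<alpha> * lam k \<le> \<alpha> * lam1" using eig_le[OF kn] a0 by simp
    moreover have "\<alpha> * lam1 < 2 * (1 + \<beta>)" using bmax(1) by simp
    moreover have "\<alpha> * lam k \<ge> 0" using a0 l0 by simp
    ultimately show "-(1+\<beta>) < tt k" "tt k \<le> 1+\<beta>" by (auto simp: tt_def)
  qed
  define U where "U = Umat u"
  define Ut where "Ut = transpose_mat U"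
  have Uc: "U \<in> carrier_mat n n" and Utc: "Ut \<in> carrier_mat n n" by (auto simp: U_def Ut_def n_def)
  have UtU: "Ut * U = 1\<^sub>m n" using Umat_orth(1)[OF orth] by (simp add: U_def Ut_def n_def)
  define T where "T = four_block_mat U (0\<^sub>m n n) (0\<^sub>m n n) U"
  define T' where "T' = four_block_mat Ut (0\<^sub>m n n) (0\<^sub>m n n) Ut"
  have Tc: "T \<in> carrier_mat (2*n) (2*n)" and T'c: "T' \<in> carrier_mat (2*n) (2*n)"
    using Uc Utc by (auto simp: T_def T'_def mult_2)
  have T'T: "T' * T = 1\<^sub>m (2*n)" using block_inv[OF Uc Utc UtU] by (simp add: T_def T'_def mult_2)
  define K :: "real mat" where "K = Kmat n tt \<beta>"
  have Kc: "K \<in> carrier_mat (2*n) (2*n)" by (simp add: K_def)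
  have Kblock: "K = four_block_mat ((1 + \<beta>) \<cdot>\<^sub>m 1\<^sub>m n - \<alpha> \<cdot>\<^sub>m Dmat n lam) ((- \<beta>) \<cdot>\<^sub>m 1\<^sub>m n) (1\<^sub>m n) (0\<^sub>m n n)"
    by (rule eq_matI) (auto simp: K_def Kmat_def Dmat_def tt_def)
  have Hmc: "Hm \<in> carrier_mat n n" by (simp add: Hm_def n_def)
  have DGeq: "DG \<alpha> \<beta> Hm = four_block_mat ((1 + \<beta>) \<cdot>\<^sub>m 1\<^sub>m n - \<alpha> \<cdot>\<^sub>m Hm) ((- \<beta>) \<cdot>\<^sub>m 1\<^sub>m n) (1\<^sub>m n) (0\<^sub>m n n)"
    using Hmc by (simp add: DG_def Let_def)
  have DGc: "DG \<alpha> \<beta> Hm \<in> carrier_mat (2*n) (2*n)" unfolding DGeq using Hmc by (auto simp: mult_2)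
  have HU: "Hm * U = U * Dmat n lam"
    using Umat_eig[OF ev] by (simp add: Hm_def U_def n_def)
  have DGT: "DG \<alpha> \<beta> Hm * T = T * K"
    unfolding DGeq Kblock T_def by (rule DG_comm[OF Hmc Uc _ HU]) (simp add: Dmat_def)
  define Ws :: "real mat" where "Ws = Wsmat n q mm"
  define Wu :: "real mat" where "Wu = Wumat n q mp"
  have Wsc: "Ws \<in> carrier_mat (2*n) (n+q)" and Wuc: "Wu \<in> carrier_mat (2*n) (n-q)" by (auto simp: Ws_def Wu_def)
  define Vs where "Vs = T * Ws"
  define Vu where "Vu = T * Wu"
  have Vsc: "Vs \<in> carrier_mat (2*n) (n+q)" and Vuc: "Vu \<in> carrier_mat (2*n) (n-q)"
    using Tc Wsc Wuc by (auto simp: Vs_def Vu_def)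
  have inv: "invertible_mat (hcat Vs Vu)"
  proof -
    have hc: "hcat Vs Vu = T * hcat Ws Wu" unfolding Vs_def Vu_def by (rule hcat_mult_left[OF Tc Wsc Wuc])
    have Hc: "hcat Ws Wu \<in> carrier_mat (2*n) (2*n)" using Wsc Wuc nq(1) by (auto simp: hcat_def)
    show ?thesis unfolding hc
    proof (rule kernel_invertible[of _ "2*n"])
      show "T * hcat Ws Wu \<in> carrier_mat (2*n) (2*n)" using Tc Hc by simp
      fix x assume x: "x \<in> carrier_vec (2*n)" and z: "(T * hcat Ws Wu) *\<^sub>v x = 0\<^sub>v (2*n)"
      have y: "hcat Ws Wu *\<^sub>v x \<in> carrier_vec (2*n)" using Hc x by simp
      have "T *\<^sub>v (hcat Ws Wu *\<^sub>v x) = 0\<^sub>v (2*n)" using z Tc Hc x by simp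
      hence "T' *\<^sub>v (T *\<^sub>v (hcat Ws Wu *\<^sub>v x)) = T' *\<^sub>v 0\<^sub>v (2*n)" by simp
      moreover have "T' *\<^sub>v (T *\<^sub>v (hcat Ws Wu *\<^sub>v x)) = (T' * T) *\<^sub>v (hcat Ws Wu *\<^sub>v x)"
        using T'c Tc y by simp
      ultimately have "hcat Ws Wu *\<^sub>v x = 0\<^sub>v (2*n)" using T'T y mat_vec_zero[OF T'c] by simp
      thus "x = 0\<^sub>v (2*n)"
        using hcat_kernel[OF nq(1) x, of mp mm] R(6) unfolding Ws_def Wu_def by blast
    qed
  qed
  have invS: "col_space_invariant (DG \<alpha> \<beta> Hm) Vs"
    unfolding col_space_invariant_def
  proof
    fix c :: "real vec" assume "c \<in> carrier_vec (dim_col Vs)"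
    hence c: "c \<in> carrier_vec (n+q)" using Vsc by simp
    define w where "w = Ws *\<^sub>v c"
    have w: "w \<in> carrier_vec (2*n)" using Wsc c by (simp add: w_def)
    have cond: "w$k = of_real (mm k) * w$(n+k)" if "q \<le> k" "k < n" for k
      unfolding w_def Ws_def by (rule Ws_fwd[OF c nq(1) that])
    have Kw: "K *\<^sub>v w \<in> carrier_vec (2*n)" using Kc w by simp
    have condK: "(K *\<^sub>v w)$k = of_real (mm k) * (K *\<^sub>v w)$(n+k)" if "q \<le> k" "k < n" for k
      unfolding K_def by (rule K_pres_Ws[OF w cond R(1) that])
    define d :: "real vec" where "d = vec (n+q) (\<lambda>j. if j < q then (K *\<^sub>v w)$j else if j < n then (K *\<^sub>v w)$(n+j) else (K *\<^sub>v w)$j)"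
    have d: "d \<in> carrier_vec (n+q)" by (simp add: d_def)
    have "K *\<^sub>v w = Ws *\<^sub>v d" unfolding d_def Ws_def by (rule Ws_bwd[OF Kw nq(1) condK])
    hence "DG \<alpha> \<beta> Hm *\<^sub>v (Vs *\<^sub>v c) = Vs *\<^sub>v d"
      unfolding Vs_def w_def by (rule inv_transfer[OF Tc DGc Kc Wsc DGT c d])
    thus "\<exists>d\<in>carrier_vec (dim_col Vs). DG \<alpha> \<beta> Hm *\<^sub>v (Vs *\<^sub>v c) = Vs *\<^sub>v d" using d Vsc by auto
  qed
  have invU: "col_space_invariant (DG \<alpha> \<beta> Hm) Vu"
    unfolding col_space_invariant_def
  proof
    fix c :: "real vec" assume "c \<in> carrier_vec (dim_col Vu)"
    hence c: "c \<in> carrier_vec (n-q)" using Vuc by simp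
    define w where "w = Wu *\<^sub>v c"
    have w: "w \<in> carrier_vec (2*n)" using Wuc c by (simp add: w_def)
    note F = Wu_fwd[OF c nq(1), where mp = mp, folded Wu_def w_def]
    have Kw: "K *\<^sub>v w \<in> carrier_vec (2*n)" using Kc w by simp
    have condK: "(K *\<^sub>v w)$k = of_real (mp k) * (K *\<^sub>v w)$(n+k)" if "q \<le> k" "k < n" for k
      unfolding K_def by (rule K_pres_Ws[OF w F(3) R(2) that])
    have z0: "(K *\<^sub>v w)$k = 0" "(K *\<^sub>v w)$(n+k) = 0" if "k < q" for k
      using K_zero_part[OF w _ F(1)[OF that] F(2)[OF that], of tt \<beta>] that nq(1) unfolding K_def by auto
    define d :: "real vec" where "d = vec (n-q) (\<lambda>j. (K *\<^sub>v w)$(n+q+j))"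
    have d: "d \<in> carrier_vec (n-q)" by (simp add: d_def)
    have "K *\<^sub>v w = Wu *\<^sub>v d" unfolding d_def Wu_def
      by (rule Wu_bwd[OF Kw nq(1)]) (use z0 condK in auto)
    hence "DG \<alpha> \<beta> Hm *\<^sub>v (Vu *\<^sub>v c) = Vu *\<^sub>v d"
      unfolding Vu_def w_def by (rule inv_transfer[OF Tc DGc Kc Wuc DGT c d])
    thus "\<exists>d\<in>carrier_vec (dim_col Vu). DG \<alpha> \<beta> Hm *\<^sub>v (Vu *\<^sub>v c) = Vu *\<^sub>v d" using d Vuc by auto
  qed
  define Tcx :: "complex mat" where "Tcx = map_mat of_real T"
  define T'cx :: "complex mat" where "T'cx = map_mat of_real T'"
  define DGcx :: "complex mat" where "DGcx = map_mat of_real (DG \<alpha> \<beta> Hm)"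
  define Kcx :: "complex mat" where "Kcx = Kmat n tt \<beta>"
  have Tcxc: "Tcx \<in> carrier_mat (2*n) (2*n)" and T'cxc: "T'cx \<in> carrier_mat (2*n) (2*n)"
    and DGcxc: "DGcx \<in> carrier_mat (2*n) (2*n)" and Kcxc: "Kcx \<in> carrier_mat (2*n) (2*n)"
    using Tc T'c DGc by (auto simp: Tcx_def T'cx_def DGcx_def Kcx_def)
  have cinv: "T'cx * Tcx = 1\<^sub>m (2*n)"
    unfolding T'cx_def Tcx_def using of_real_hom.mat_hom_mult[OF T'c Tc] T'T of_real_hom.mat_hom_one by metis
  have ccomm: "DGcx * Tcx = Tcx * Kcx"
  proof -
    have "DGcx * Tcx = map_mat of_real (DG \<alpha> \<beta> Hm * T)"
      unfolding DGcx_def Tcx_def by (rule of_real_hom.mat_hom_mult[OF DGc Tc, symmetric])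
    also have "\<dots> = map_mat of_real (T * K)" using DGT by simp
    also have "\<dots> = Tcx * map_mat of_real K"
      unfolding Tcx_def by (rule of_real_hom.mat_hom_mult[OF Tc Kc])
    also have "map_mat of_real K = Kcx" unfolding K_def Kcx_def by (rule map_Kmat)
    finally show ?thesis .
  qed
  have mapVs: "map_mat of_real Vs = Tcx * (Wsmat n q mm :: complex mat)"
  proof -
    have "map_mat of_real Vs = Tcx * map_mat of_real Ws"
      unfolding Vs_def Tcx_def by (rule of_real_hom.mat_hom_mult[OF Tc Wsc])
    also have "map_mat of_real Ws = (Wsmat n q mm :: complex mat)" unfolding Ws_def by (rule map_Wsmat)
    finally show ?thesis .
  qed
  have mapVu: "map_mat of_real Vu = Tcx * (Wumat n q mp :: complex mat)"
  proof -
    have "map_mat of_real Vu = Tcx * map_mat of_real Wu"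
      unfolding Vu_def Tcx_def by (rule of_real_hom.mat_hom_mult[OF Tc Wuc])
    also have "map_mat of_real Wu = (Wumat n q mp :: complex mat)" unfolding Wu_def by (rule map_Wumat)
    finally show ?thesis .
  qed
  have eigS: "cmod \<mu> \<le> 1" if "restr_eigenvalue (DG \<alpha> \<beta> Hm) Vs \<mu>" for \<mu>
  proof -
    from that obtain c where c: "c \<in> carrier_vec (n+q)"
      and nz: "Tcx * Wsmat n q mm *\<^sub>v c \<noteq> 0\<^sub>v (2*n)"
      and e: "DGcx *\<^sub>v (Tcx * Wsmat n q mm *\<^sub>v c) = \<mu> \<cdot>\<^sub>v (Tcx * Wsmat n q mm *\<^sub>v c)"
      unfolding restr_eigenvalue_def Let_def mapVs DGcx_def[symmetric] using Vsc by auto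
    have "Wsmat n q mm *\<^sub>v c \<in> carrier_vec (2*n) \<and> Wsmat n q mm *\<^sub>v c \<noteq> 0\<^sub>v (2*n)
      \<and> Kcx *\<^sub>v (Wsmat n q mm *\<^sub>v c) = \<mu> \<cdot>\<^sub>v (Wsmat n q mm *\<^sub>v c)"
      by (rule eig_transfer[OF Tcxc T'cxc DGcxc Kcxc Wsmat_carrier cinv ccomm c nz e])
    from K_eigen[of _ n tt \<beta> \<mu>, OF this[THEN conjunct1] this[THEN conjunct2, THEN conjunct1]
        this[THEN conjunct2, THEN conjunct2, unfolded Kcx_def]]
    obtain k where k: "k < n" "(Wsmat n q mm *\<^sub>v c) $ (n+k) \<noteq> 0"
      "(Wsmat n q mm *\<^sub>v c) $ k = \<mu> * (Wsmat n q mm *\<^sub>v c) $ (n+k)"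
      "\<mu>^2 - of_real (tt k) * \<mu> + of_real \<beta> = 0" by blast
    show ?thesis
    proof (cases "q \<le> k")
      case True
      have "(Wsmat n q mm *\<^sub>v c) $ k = of_real (mm k) * (Wsmat n q mm *\<^sub>v c) $ (n+k)"
        by (rule Ws_fwd[OF c nq(1) True k(1)])
      hence "\<mu> = of_real (mm k)" using k(2,3) by simp
      thus ?thesis using R(3,4)[OF True k(1)] by simp
    next
      case False
      hence kq: "k < q" by simp
      show ?thesis by (rule quad_small[OF k(4) bmax(2) b1 small[OF kq]])
    qed
  qed
  have eigU: "cmod \<mu> > 1" if "restr_eigenvalue (DG \<alpha> \<beta> Hm) Vu \<mu>" for \<mu>
  proof -
    from that obtain c where c: "c \<in> carrier_vec (n-q)"
      and nz: "Tcx * Wumat n q mp *\<^sub>v c \<noteq> 0\<^sub>v (2*n)"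
      and e: "DGcx *\<^sub>v (Tcx * Wumat n q mp *\<^sub>v c) = \<mu> \<cdot>\<^sub>v (Tcx * Wumat n q mp *\<^sub>v c)"
      unfolding restr_eigenvalue_def Let_def mapVu DGcx_def[symmetric] using Vuc by auto
    have "Wumat n q mp *\<^sub>v c \<in> carrier_vec (2*n) \<and> Wumat n q mp *\<^sub>v c \<noteq> 0\<^sub>v (2*n)
      \<and> Kcx *\<^sub>v (Wumat n q mp *\<^sub>v c) = \<mu> \<cdot>\<^sub>v (Wumat n q mp *\<^sub>v c)"
      by (rule eig_transfer[OF Tcxc T'cxc DGcxc Kcxc Wumat_carrier cinv ccomm c nz e])
    from K_eigen[of _ n tt \<beta> \<mu>, OF this[THEN conjunct1] this[THEN conjunct2, THEN conjunct1]
        this[THEN conjunct2, THEN conjunct2, unfolded Kcx_def]]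
    obtain k where k: "k < n" "(Wumat n q mp *\<^sub>v c) $ (n+k) \<noteq> 0"
      "(Wumat n q mp *\<^sub>v c) $ k = \<mu> * (Wumat n q mp *\<^sub>v c) $ (n+k)" by blast
    have True: "q \<le> k"
    proof (rule ccontr)
      assume "\<not> q \<le> k"
      hence "(Wumat n q mp *\<^sub>v c) $ (n+k) = 0" using Wu_fwd(2)[OF c nq(1)] by simp
      thus False using k(2) by simp
    qed
    have "(Wumat n q mp *\<^sub>v c) $ k = of_real (mp k) * (Wumat n q mp *\<^sub>v c) $ (n+k)"
      by (rule Wu_fwd(3)[OF c nq(1) True k(1)])
    hence "\<mu> = of_real (mp k)" using k(2,3) by simp
    thus ?thesis using R(5)[OF True k(1)] by simp
  qed
  have main: "Vs \<in> carrier_mat (2*n) (n+q) \<and> Vu \<in> carrier_mat (2*n) (n-q) \<and> invertible_mat (hcat Vs Vu)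
     \<and> col_space_invariant (DG \<alpha> \<beta> Hm) Vs \<and> (\<forall>\<mu>. restr_eigenvalue (DG \<alpha> \<beta> Hm) Vs \<mu> \<longrightarrow> cmod \<mu> \<le> 1)
     \<and> col_space_invariant (DG \<alpha> \<beta> Hm) Vu \<and> (\<forall>\<mu>. restr_eigenvalue (DG \<alpha> \<beta> Hm) Vu \<mu> \<longrightarrow> cmod \<mu> > 1)"
    using Vsc Vuc inv invS invU eigS eigU by blast
  show ?thesis
    apply (rule exI[of _ Vs], rule exI[of _ Vu])
    using main nq unfolding Hm_def H_def n_def by simp
qed


end
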